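(* Let $w\in\mathcal S_n$. For $a\in\mathrm R(w)$ put $t(a)=|\mathrm{sup}(a)|$ (which depends only on $[a]$). Define a relation on the commutation classes of $\mathrm R(w)$ as the transitive closure of the covering relations $[a]<[b]$ whenever $[a]$ and $[b]$ are adjacent in $C(w)$ and $t(b)=t(a)+1$. This is a partial order making the vertex set of $C(w)$ a ranked poset with rank function $t$, with a unique minimal element $[a_{\min}]$ and a unique maximal element $[a_{\max}]$.
   Context: Permutations are in one-line notation; $\mathrm{Des}(u)=\{i:u_i>u_{i+1}\}$. A word $a=a_1\cdots a_\ell$ with letters in $\{1,\dots,n-1\}$ acts on a word of length $n$ by successively swapping the entries in positions $a_j$ and $a_j+1$. $\mathrm R(w)$: reduced words of $w$ (length $\ell(w)$ = number of inversions, action on $12\cdots n$ yields $w$). Commutation: replace a factor $ij$, $|i-j|\ge2$, by $ji$; long braid relation: replace $i(i+1)i$ by $(i+1)i(i+1)$ or vice versa; $[a]$ is the commutation class of $a$. $C(w)$: vertices are commutation classes, $[a]\ne[b]$ adjacent if some $a'\in[a]$, $b'\in[b]$ differ by one long braid relation. $a_{\min}$ (resp. $a_{\max}$): set $w^0=w$, for $j=0,\dots,\ell(w)-1$ let $i_j$ be the smallest (resp. largest) element of $\mathrm{Des}(w^j)$ and obtain $w^{j+1}$ by swapping entries in positions $i_j,i_j+1$; the word is $i_{\ell(w)-1}\cdots i_0$. For an inversion $(p,q)$ of $w$, $P_a(p,q)$ is the index of the step of $a$ swapping $p$ and $q$. $\mathrm T_w$: triples $(x,y,z)$, $x<y<z$,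 with $z,y,x$ in this order in $w$. $\Gamma(a,(x,y,z))=1$ if $P_a(y,x)>P_a(z,y)$, else $0$. $\mathrm{sup}(a)=\{\tau\in\mathrm T_w:\Gamma(a,\tau)=1\}$. *)

theory Defs
  imports Main
begin

(* permutations of {1..n} in one-line notation, as lists *)
definition is_perm :: "nat \<Rightarrow> nat list \<Rightarrow> bool" where
  "is_perm n w \<longleftrightarrow> length w = n \<and> distinct w \<and> set w = {1..n}"

definition id_word :: "nat \<Rightarrow> nat list" where
  "id_word n = [1..<n+1]"

(* swap the entries in (1-based) positions i and i+1 *)
definition swap_at :: "nat \<Rightarrow> nat list \<Rightarrow> nat list" where
  "swap_at i u = u[i - 1 := u ! i, i := u ! (i - 1)]"

(* action of a word a_1 ... a_l: a_1 is applied first *)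
definition act :: "nat list \<Rightarrow> nat list \<Rightarrow> nat list" where
  "act a u = fold swap_at a u"

definition Des :: "nat list \<Rightarrow> nat set" where
  "Des u = {i. 1 \<le> i \<and> i < length u \<and> u ! (i - 1) > u ! i}"

definition len :: "nat list \<Rightarrow> nat" where
  "len w = card {(i, j). i < j \<and> j < length w \<and> w ! i > w ! j}"

definition reduced_words :: "nat \<Rightarrow> nat list \<Rightarrow> nat list set" where
  "reduced_words n w = {a. set a \<subseteq> {1..n-1} \<and> length a = len w \<and> act a (id_word n) = w}"

definition comm_step :: "nat list \<Rightarrow> nat list \<Rightarrow> bool" where
  "comm_step a b \<longleftrightarrow> (\<exists>xs ys i j. (i \<ge> j + 2 \<or> j \<ge> i + 2) \<and>
      a = xs @ [i, j] @ ys \<and> b = xs @ [j, i] @ ys)"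

definition comm_equiv :: "nat list \<Rightarrow> nat list \<Rightarrow> bool" where
  "comm_equiv = comm_step\<^sup>*\<^sup>*"

definition cclass :: "nat list \<Rightarrow> nat list set" where
  "cclass a = {b. comm_equiv a b}"

definition braid_step :: "nat list \<Rightarrow> nat list \<Rightarrow> bool" where
  "braid_step a b \<longleftrightarrow> (\<exists>xs ys i.
      (a = xs @ [i, i+1, i] @ ys \<and> b = xs @ [i+1, i, i+1] @ ys) \<or>
      (a = xs @ [i+1, i, i+1] @ ys \<and> b = xs @ [i, i+1, i] @ ys))"

definition vertices :: "nat \<Rightarrow> nat list \<Rightarrow> nat list set set" where
  "vertices n w = cclass ` reduced_words n w"

definition adjacent :: "nat list set \<Rightarrow> nat list set \<Rightarrow> bool" where
  "adjacent A B \<longleftrightarrow> A \<noteq> B \<and> (\<exists>a\<in>A. \<exists>b\<in>B. braid_step a b)"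

definition amin_iter :: "nat list \<Rightarrow> nat \<Rightarrow> nat list" where
  "amin_iter w j = ((\<lambda>u. swap_at (Min (Des u)) u) ^^ j) w"

definition amax_iter :: "nat list \<Rightarrow> nat \<Rightarrow> nat list" where
  "amax_iter w j = ((\<lambda>u. swap_at (Max (Des u)) u) ^^ j) w"

definition a_min :: "nat list \<Rightarrow> nat list" where
  "a_min w = rev (map (\<lambda>j. Min (Des (amin_iter w j))) [0..<len w])"

definition a_max :: "nat list \<Rightarrow> nat list" where
  "a_max w = rev (map (\<lambda>j. Max (Des (amax_iter w j))) [0..<len w])"

(* the set of the two values swapped at step j (0-based) of a acting on 12...n *)
definition swapped :: "nat \<Rightarrow> nat list \<Rightarrow> nat \<Rightarrow> nat set" where
  "swapped n a j = (let u = act (take j a) (id_word n); i = a ! j in {u ! (i - 1), u ! i})"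

definition P :: "nat \<Rightarrow> nat list \<Rightarrow> nat \<Rightarrow> nat \<Rightarrow> nat" where
  "P n a p q = (LEAST j. j < length a \<and> swapped n a j = {p, q})"

definition triples :: "nat list \<Rightarrow> (nat \<times> nat \<times> nat) set" where
  "triples w = {(x, y, z). x < y \<and> y < z \<and>
      (\<exists>i j k. i < j \<and> j < k \<and> k < length w \<and> w ! i = z \<and> w ! j = y \<and> w ! k = x)}"

definition Gamma :: "nat \<Rightarrow> nat list \<Rightarrow> nat \<times> nat \<times> nat \<Rightarrow> nat" where
  "Gamma n a \<tau> = (case \<tau> of (x, y, z) \<Rightarrow> if P n a y x > P n a z y then 1 else 0)"

definition supp :: "nat list \<Rightarrow> nat list \<Rightarrow> (nat \<times> nat \<times> nat) set" where
  "supp w a = {\<tau> \<in> triples w. Gamma (length w) a \<tau> = 1}"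

definition tstat :: "nat list \<Rightarrow> nat list \<Rightarrow> nat" where
  "tstat w a = card (supp w a)"

definition cover :: "nat \<Rightarrow> nat list \<Rightarrow> nat list set \<Rightarrow> nat list set \<Rightarrow> bool" where
  "cover n w A B \<longleftrightarrow> A \<in> vertices n w \<and> B \<in> vertices n w \<and> adjacent A B \<and>
     (\<exists>a\<in>A. \<exists>b\<in>B. tstat w b = tstat w a + 1)"

definition tord :: "nat \<Rightarrow> nat list \<Rightarrow> (nat list set \<times> nat list set) set" where
  "tord n w = {(A, B). A \<in> vertices n w \<and> B \<in> vertices n w \<and> (cover n w)\<^sup>*\<^sup>* A B}"

definition covers_in :: "'a set \<Rightarrow> ('a \<times> 'a) set \<Rightarrow> 'a \<Rightarrow> 'a \<Rightarrow> bool" where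
  "covers_in V r A B \<longleftrightarrow> A \<in> V \<and> B \<in> V \<and> (A, B) \<in> r \<and> A \<noteq> B \<and>
     \<not> (\<exists>C\<in>V. C \<noteq> A \<and> C \<noteq> B \<and> (A, C) \<in> r \<and> (C, B) \<in> r)"

definition minimal_elts :: "'a set \<Rightarrow> ('a \<times> 'a) set \<Rightarrow> 'a set" where
  "minimal_elts V r = {A \<in> V. \<forall>B\<in>V. (B, A) \<in> r \<longrightarrow> B = A}"

definition maximal_elts :: "'a set \<Rightarrow> ('a \<times> 'a) set \<Rightarrow> 'a set" where
  "maximal_elts V r = {A \<in> V. \<forall>B\<in>V. (A, B) \<in> r \<longrightarrow> B = A}"

end

theory Submission
  imports Defs
begin


lemma length_swap[simp]: "length (swap_at k u) = length u"
  by (simp add: swap_at_def)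

lemma nth_swap:
  assumes "1 \<le> k" "k < length u" "i < length u"
  shows "swap_at k u ! i = (if i = k - 1 then u!k else if i = k then u!(k-1) else u!i)"
  using assms by (auto simp: swap_at_def nth_list_update)

lemma set_swap_at[simp]: "1 \<le> k \<Longrightarrow> k < length u \<Longrightarrow> set (swap_at k u) = set u"
  unfolding swap_at_def by (rule set_swap) auto

lemma distinct_swap_at[simp]: "1 \<le> k \<Longrightarrow> k < length u \<Longrightarrow> distinct (swap_at k u) = distinct u"
  unfolding swap_at_def by (rule distinct_swap) auto

lemma swap_swap[simp]: "1 \<le> k \<Longrightarrow> k < length u \<Longrightarrow> swap_at k (swap_at k u) = u"
  by (rule nth_equalityI) (auto simp: nth_swap)

definition ix :: "nat list \<Rightarrow> nat \<Rightarrow> nat" where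
  "ix u x = (LEAST i. i < length u \<and> u ! i = x)"

lemma ix_nth: "distinct u \<Longrightarrow> i < length u \<Longrightarrow> ix u (u ! i) = i"
  unfolding ix_def
  by (rule Least_equality) (auto simp: nth_eq_iff_index_eq)

lemma ix_in: "x \<in> set u \<Longrightarrow> ix u x < length u \<and> u ! (ix u x) = x"
proof -
  assume "x \<in> set u"
  then obtain i where "i < length u" "u ! i = x" by (auto simp: in_set_conv_nth)
  then show ?thesis unfolding ix_def by (metis (mono_tags, lifting) LeastI)
qed

definition tr :: "nat \<Rightarrow> nat \<Rightarrow> nat" where
  "tr k i = (if i = k - 1 then k else if i = k then k - 1 else i)"

lemma tr_tr[simp]: "1 \<le> k \<Longrightarrow> tr k (tr k i) = i"
  by (auto simp: tr_def)

lemma tr_less_len: "1 \<le> k \<Longrightarrow> k < n \<Longrightarrow> i < n \<Longrightarrow> tr k i < n"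
  by (auto simp: tr_def)

lemma nth_swap_tr: "1 \<le> k \<Longrightarrow> k < length u \<Longrightarrow> i < length u \<Longrightarrow> swap_at k u ! i = u ! (tr k i)"
  by (auto simp: nth_swap tr_def)

lemma ix_swap:
  assumes "distinct u" "1 \<le> k" "k < length u" "x \<in> set u"
  shows "ix (swap_at k u) x = tr k (ix u x)"
proof -
  have i: "ix u x < length u" "u ! ix u x = x" using ix_in[OF assms(4)] by auto
  have "swap_at k u ! tr k (ix u x) = x"
    using i assms by (simp add: nth_swap_tr tr_less_len)
  then show ?thesis
    using ix_nth[of "swap_at k u" "tr k (ix u x)"] assms i by (simp add: tr_less_len)
qed

definition bf :: "nat list \<Rightarrow> nat \<Rightarrow> nat \<Rightarrow> bool" where
  "bf u a b \<longleftrightarrow> a \<in> set u \<and> b \<in> set u \<and> ix u a < ix u b"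

definition Inv :: "nat list \<Rightarrow> (nat \<times> nat) set" where
  "Inv u = {(x, y). x < y \<and> bf u y x}"

lemma tr_less:
  assumes "1 \<le> k" "i \<noteq> j"
  shows "(tr k i < tr k j) = (if {i, j} = {k - 1, k} then j < i else i < j)"
  using assms by (auto simp: tr_def doubleton_eq_iff)

lemma bf_swap:
  assumes "distinct u" "1 \<le> k" "k < length u"
  shows "bf (swap_at k u) a b = (if {a, b} = {u!(k-1), u!k} then bf u b a else bf u a b)"
proof (cases "a \<in> set u \<and> b \<in> set u \<and> a \<noteq> b")
  case True
  then have a: "ix u a < length u" "u ! ix u a = a" and b: "ix u b < length u" "u ! ix u b = b"
    using ix_in by auto
  have ne: "ix u a \<noteq> ix u b" using True a b by metis
  have eq: "({a, b} = {u!(k-1), u!k}) = ({ix u a, ix u b} = {k - 1, k})"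
  proof -
    have "u ! (k-1) \<noteq> u ! k" using assms by (simp add: nth_eq_iff_index_eq)
    then show ?thesis using a b assms ne
      by (auto simp: doubleton_eq_iff nth_eq_iff_index_eq)
  qed
  have "bf (swap_at k u) a b = (tr k (ix u a) < tr k (ix u b))"
    using True assms by (simp add: bf_def ix_swap)
  also have "\<dots> = (if {ix u a, ix u b} = {k - 1, k} then ix u b < ix u a else ix u a < ix u b)"
    by (rule tr_less[OF assms(2) ne])
  also have "\<dots> = (if {a, b} = {u!(k-1), u!k} then bf u b a else bf u a b)"
    using True eq unfolding bf_def by presburger
  finally show ?thesis .
next
  case False
  then show ?thesis using assms
    by (auto simp: bf_def)
qed


lemma bf_pq:
  assumes "distinct u" "1 \<le> k" "k < length u"
  shows "bf u (u!(k-1)) (u!k)" "\<not> bf u (u!k) (u!(k-1))"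
  using assms by (auto simp: bf_def ix_nth)

lemma finite_Inv: "finite (Inv u)"
proof -
  have "Inv u \<subseteq> set u \<times> set u" by (auto simp: Inv_def bf_def)
  then show ?thesis by (rule finite_subset) auto
qed

lemma Inv_swap:
  assumes "distinct u" "1 \<le> k" "k < length u"
  shows "Inv (swap_at k u) = (if u!(k-1) < u!k then insert (u!(k-1), u!k) (Inv u)
            else Inv u - {(u!k, u!(k-1))})"
proof -
  have ne: "u!(k-1) \<noteq> u!k" using assms by (simp add: nth_eq_iff_index_eq)
  note pq = bf_pq[OF assms]
  show ?thesis
    unfolding Inv_def using assms ne pq
    by (auto simp: bf_swap doubleton_eq_iff)
qed

lemma len_Inv:
  assumes "distinct u"
  shows "len u = card (Inv u)"
proof -
  let ?A = "{(i, j). i < j \<and> j < length u \<and> u ! i > u ! j}"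
  have "bij_betw (\<lambda>(i, j). (u ! j, u ! i)) ?A (Inv u)"
  proof (rule bij_betw_imageI)
    show "inj_on (\<lambda>(i, j). (u ! j, u ! i)) ?A"
      using assms by (auto simp: inj_on_def nth_eq_iff_index_eq)
    show "(\<lambda>(i, j). (u ! j, u ! i)) ` ?A = Inv u"
    proof
      show "(\<lambda>(i, j). (u ! j, u ! i)) ` ?A \<subseteq> Inv u"
        using assms by (auto simp: Inv_def bf_def ix_nth)
      show "Inv u \<subseteq> (\<lambda>(i, j). (u ! j, u ! i)) ` ?A"
      proof
        fix p assume "p \<in> Inv u"
        then obtain x y where p: "p = (x, y)" "x < y" "bf u y x" by (auto simp: Inv_def)
        then have "(ix u y, ix u x) \<in> ?A" using ix_in by (auto simp: bf_def)
        moreover have "(u ! ix u x, u ! ix u y) = p" using p ix_in by (auto simp: bf_def)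
        ultimately show "p \<in> (\<lambda>(i, j). (u ! j, u ! i)) ` ?A" by force
      qed
    qed
  qed
  then show ?thesis unfolding len_def by (rule bij_betw_same_card)
qed

lemma len_swap:
  assumes "distinct u" "1 \<le> k" "k < length u"
  shows "len (swap_at k u) = (if u!(k-1) < u!k then len u + 1 else len u - 1)"
    "\<not> u!(k-1) < u!k \<Longrightarrow> len u \<ge> 1"
proof -
  have ne: "u!(k-1) \<noteq> u!k" using assms by (simp add: nth_eq_iff_index_eq)
  note pq = bf_pq[OF assms]
  have ds: "distinct (swap_at k u)" using assms by simp
  show "len (swap_at k u) = (if u!(k-1) < u!k then len u + 1 else len u - 1)"
  proof (cases "u!(k-1) < u!k")
    case True
    then have "(u!(k-1), u!k) \<notin> Inv u" using pq by (auto simp: Inv_def)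
    then show ?thesis using True
      by (simp add: len_Inv[OF ds] len_Inv[OF assms(1)] Inv_swap[OF assms] finite_Inv)
  next
    case False
    then have "(u!k, u!(k-1)) \<in> Inv u" using pq ne by (auto simp: Inv_def)
    then show ?thesis using False
      by (simp add: len_Inv[OF ds] len_Inv[OF assms(1)] Inv_swap[OF assms] finite_Inv)
  qed
  show "\<not> u!(k-1) < u!k \<Longrightarrow> len u \<ge> 1"
  proof -
    assume "\<not> u!(k-1) < u!k"
    then have "(u!k, u!(k-1)) \<in> Inv u" using pq ne by (auto simp: Inv_def)
    then have "card (Inv u) \<ge> 1" using finite_Inv
      by (metis One_nat_def Suc_leI card_gt_0_iff empty_iff)
    then show ?thesis by (simp add: len_Inv[OF assms(1)])
  qed
qed


lemma id_word_props[simp]: "length (id_word n) = n" "distinct (id_word n)" "set (id_word n) = {1..n}"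
  by (auto simp: id_word_def)

lemma sorted_id[simp]: "sorted (id_word n)" by (simp add: id_word_def del: upt_Suc)

lemma id_perm: "is_perm n (id_word n)" by (simp add: is_perm_def)

lemma act_Nil[simp]: "act [] u = u" by (simp add: act_def)
lemma act_snoc[simp]: "act (a @ [k]) u = swap_at k (act a u)" by (simp add: act_def)
lemma act_append: "act (a @ b) u = act b (act a u)" by (simp add: act_def)

lemma act_props:
  assumes "set a \<subseteq> {1..length u - 1}"
  shows "length (act a u) = length u \<and> set (act a u) = set u \<and> distinct (act a u) = distinct u"
  using assms
proof (induction a rule: rev_induct)
  case Nil then show ?case by simp
next
  case (snoc k a)
  then have "1 \<le> k" "k < length u" by auto
  with snoc show ?case by auto
qed

lemma is_perm_swap: "is_perm n w \<Longrightarrow> 1 \<le> k \<Longrightarrow> k < n \<Longrightarrow> is_perm n (swap_at k w)"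
  by (simp add: is_perm_def)

lemma is_perm_act: "set a \<subseteq> {1..n-1} \<Longrightarrow> is_perm n (act a (id_word n))"
  using act_props[of a "id_word n"] by (simp add: is_perm_def)

lemma nth_id: "i < n \<Longrightarrow> id_word n ! i = Suc i"
  by (simp add: id_word_def del: upt_Suc)

lemma Inv_id: "Inv (id_word n) = {}"
proof -
  have ix: "ix (id_word n) v = v - 1" if "v \<in> {1..n}" for v
  proof -
    have i: "v - 1 < n" using that by auto
    have "id_word n ! (v-1) = v" using nth_id[OF i] that by auto
    then show ?thesis using ix_nth[of "id_word n" "v-1"] i by simp
  qed
  show ?thesis by (auto simp: Inv_def bf_def ix)
qed

lemma len_id: "len (id_word n) = 0"
  by (simp add: len_Inv Inv_id)

lemma len_act_le: "set a \<subseteq> {1..n-1} \<Longrightarrow> len (act a (id_word n)) \<le> length a"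
proof (induction a rule: rev_induct)
  case Nil then show ?case by (simp add: len_id)
next
  case (snoc k a)
  then have k: "1 \<le> k" "k < n" and IH: "len (act a (id_word n)) \<le> length a" by auto
  have p: "is_perm n (act a (id_word n))" using snoc by (intro is_perm_act) auto
  then show ?case using len_swap[of "act a (id_word n)" k] k IH
    by (auto simp: is_perm_def)
qed

lemma Des_def2: "k \<in> Des u \<longleftrightarrow> 1 \<le> k \<and> k < length u \<and> u!(k-1) > u!k"
  by (simp add: Des_def)

lemma R_snoc:
  assumes "is_perm n w"
  shows "a @ [k] \<in> reduced_words n w \<longleftrightarrow> k \<in> Des w \<and> a \<in> reduced_words n (swap_at k w)"
proof
  assume R: "a @ [k] \<in> reduced_words n w"
  then have k: "1 \<le> k" "k < n" and sa: "set a \<subseteq> {1..n-1}"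
    and L: "length a + 1 = len w" and W: "swap_at k (act a (id_word n)) = w"
    by (auto simp: reduced_words_def)
  let ?v = "act a (id_word n)"
  have pv: "is_perm n ?v" using sa by (rule is_perm_act)
  then have lv: "length ?v = n" "distinct ?v" by (auto simp: is_perm_def)
  have sw: "swap_at k w = ?v" using W k lv by (metis swap_swap)
  have le: "len ?v \<le> length a" using sa by (rule len_act_le)
  have asc: "?v!(k-1) < ?v!k"
  proof (rule ccontr)
    assume "\<not> ?thesis"
    then have "len w = len ?v - 1" using len_swap(1)[of ?v k] lv k W by auto
    with L le show False by simp
  qed
  then have "len w = len ?v + 1" using len_swap(1)[of ?v k] lv k W by auto
  moreover have "k \<in> Des w" using asc k lv W by (auto simp: Des_def2 nth_swap)
  ultimately show "k \<in> Des w \<and> a \<in> reduced_words n (swap_at k w)"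
    using L sa sw by (auto simp: reduced_words_def)
next
  assume A: "k \<in> Des w \<and> a \<in> reduced_words n (swap_at k w)"
  have w: "length w = n" "distinct w" using assms by (auto simp: is_perm_def)
  have k: "1 \<le> k" "k < n" using A w by (auto simp: Des_def2)
  have "len (swap_at k w) = len w - 1" "len w \<ge> 1"
    using len_swap[of w k] A w k by (auto simp: Des_def2)
  then show "a @ [k] \<in> reduced_words n w"
    using A k w by (auto simp: reduced_words_def)
qed

lemma R_Nil: "[] \<in> reduced_words n w \<longleftrightarrow> w = id_word n"
  by (auto simp: reduced_words_def len_id)

lemma Des_finite: "finite (Des u)" by (rule finite_subset[of _ "{..<length u}"]) (auto simp: Des_def)

lemma Des_empty_sorted: "Des u = {} \<Longrightarrow> sorted u"
proof -
  assume "Des u = {}"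
  have "\<not> u!i > u!(Suc i)" if "Suc i < length u" for i
  proof
    assume "u!i > u!(Suc i)"
    then have "Suc i \<in> Des u" using that by (simp add: Des_def2)
    then show False using \<open>Des u = {}\<close> by simp
  qed
  then show ?thesis unfolding sorted_iff_nth_Suc by (simp add: not_less)
qed

lemma len0_iff:
  assumes "is_perm n w"
  shows "len w = 0 \<longleftrightarrow> Des w = {}" "len w = 0 \<Longrightarrow> w = id_word n"
proof -
  have w: "length w = n" "distinct w" using assms by (auto simp: is_perm_def)
  show "len w = 0 \<longleftrightarrow> Des w = {}"
  proof
    assume "len w = 0"
    show "Des w = {}"
    proof (rule ccontr)
      assume "Des w \<noteq> {}"
      then obtain k where "k \<in> Des w" by blast
      then show False using len_swap(2)[of w k] w \<open>len w = 0\<close> by (auto simp: Des_def2)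
    qed
  next
    assume "Des w = {}"
    then have "sorted w" by (rule Des_empty_sorted)
    then have H: "\<forall>i j. i < j \<and> j < length w \<longrightarrow> w!i < w!j"
      using w by (metis nat_less_le nth_eq_iff_index_eq order.strict_trans sorted_iff_nth_mono_less)
    have "\<not> (i < j \<and> j < length w \<and> w!i > w!j)" for i j using H[rule_format, of i j] by auto
    then have "{(i, j). i < j \<and> j < length w \<and> w ! i > w ! j} = {}" by auto
    then show "len w = 0" unfolding len_def by (metis card.empty)
  qed
  then show "len w = 0 \<Longrightarrow> w = id_word n"
    using Des_empty_sorted[of w] assms
    by (intro sorted_distinct_set_unique) (auto simp: is_perm_def)
qed



lemma swapped_snoc_lt: "j < length a \<Longrightarrow> swapped n (a @ [k]) j = swapped n a j"
  by (simp add: swapped_def nth_append)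

lemma swapped_snoc_last: "swapped n (a @ [k]) (length a) =
    {act a (id_word n) ! (k - 1), act a (id_word n) ! k}"
  by (simp add: swapped_def Let_def)

lemma Inv_snoc:
  assumes "is_perm n w" "k \<in> Des w"
  shows "Inv w = insert (w!k, w!(k-1)) (Inv (swap_at k w))" "(w!k, w!(k-1)) \<notin> Inv (swap_at k w)"
proof -
  have w: "length w = n" "distinct w" using assms by (auto simp: is_perm_def)
  have k: "1 \<le> k" "k < length w" "w!(k-1) > w!k" using assms by (auto simp: Des_def2)
  let ?w = "swap_at k w"
  have w': "length ?w = length w" "distinct ?w" "?w!(k-1) = w!k" "?w!k = w!(k-1)"
    using w k by (auto simp: nth_swap)
  have ww: "swap_at k ?w = w" using k by simp
  show "Inv w = insert (w!k, w!(k-1)) (Inv (swap_at k w))"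
    using Inv_swap[of ?w k] w' k ww by simp
  show "(w!k, w!(k-1)) \<notin> Inv (swap_at k w)"
    using bf_pq(2)[of ?w k] w' k by (auto simp: Inv_def)
qed

lemma claimA:
  assumes "is_perm n w" "a \<in> reduced_words n w"
  shows "(\<forall>j<length a. \<exists>x y. x < y \<and> (x, y) \<in> Inv w \<and> swapped n a j = {x, y}) \<and>
         (\<forall>x y. (x, y) \<in> Inv w \<longrightarrow> (\<exists>j<length a. swapped n a j = {x, y}))"
  using assms
proof (induction a arbitrary: w rule: rev_induct)
  case Nil
  then show ?case by (simp add: R_Nil Inv_id)
next
  case (snoc k a)
  let ?w = "swap_at k w"
  have D: "k \<in> Des w" and R: "a \<in> reduced_words n ?w" using snoc R_snoc by auto
  have k: "1 \<le> k" "k < n" using D snoc by (auto simp: Des_def2 is_perm_def)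
  have pw: "is_perm n ?w" using snoc k by (simp add: is_perm_swap)
  note IH = snoc.IH[OF pw R]
  note I = Inv_snoc[OF snoc(2) D]
  have act: "act a (id_word n) = ?w" using R by (simp add: reduced_words_def)
  have w: "length w = n" using snoc by (auto simp: is_perm_def)
  have last: "swapped n (a @ [k]) (length a) = {w!k, w!(k-1)}"
    using k w by (simp add: swapped_snoc_last act nth_swap insert_commute)
  have lt: "w!k < w!(k-1)" using D by (simp add: Des_def2)
  show ?case
  proof (intro conjI allI impI)
    fix j assume j: "j < length (a @ [k])"
    show "\<exists>x y. x < y \<and> (x, y) \<in> Inv w \<and> swapped n (a @ [k]) j = {x, y}"
    proof (cases "j < length a")
      case True then show ?thesis using IH I by (simp add: swapped_snoc_lt) blast
    next
      case False
      then have "j = length a" using j by simp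
      then show ?thesis using last lt I by auto
    qed
  next
    fix x y assume "(x, y) \<in> Inv w"
    then have "(x, y) = (w!k, w!(k-1)) \<or> (x, y) \<in> Inv ?w" using I by auto
    then show "\<exists>j<length (a @ [k]). swapped n (a @ [k]) j = {x, y}"
    proof
      assume "(x, y) = (w!k, w!(k-1))"
      then show ?thesis using last by (intro exI[of _ "length a"]) auto
    next
      assume "(x, y) \<in> Inv ?w"
      then obtain j where "j < length a" "swapped n a j = {x, y}" using IH by blast
      then show ?thesis by (intro exI[of _ j]) (simp add: swapped_snoc_lt)
    qed
  qed
qed

lemma Least_agree:
  fixes Q Q' :: "nat \<Rightarrow> bool" and j0 m :: nat
  assumes "Q j0" "j0 < m" "\<And>j. j < m \<Longrightarrow> Q j = Q' j"
  shows "Least Q = Least Q'" "Least Q < m"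
proof -
  have l: "Least Q \<le> j0" using assms(1) by (rule Least_le)
  have q: "Q (Least Q)" using assms(1) by (rule LeastI)
  show lm: "Least Q < m" using l assms(2) by simp
  have q': "Q' (Least Q)" using q lm assms(3) by simp
  have l': "Least Q' \<le> Least Q" using q' by (rule Least_le)
  have "Q' (Least Q')" using q' by (rule LeastI)
  then have "Q (Least Q')" using l' lm assms(3) by simp
  then have "Least Q \<le> Least Q'" by (rule Least_le)
  with l' show "Least Q = Least Q'" by simp
qed

lemma P_sym: "P n a x y = P n a y x"
  by (simp add: P_def insert_commute)

lemma P_snoc_old:
  assumes "is_perm n w" "a @ [k] \<in> reduced_words n w" "(x, y) \<in> Inv (swap_at k w)"
  shows "P n (a @ [k]) x y = P n a x y" "P n a x y < length a"
proof -
  let ?w = "swap_at k w"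
  have D: "k \<in> Des w" and R: "a \<in> reduced_words n ?w" using assms R_snoc by auto
  have k: "1 \<le> k" "k < n" using D assms by (auto simp: Des_def2 is_perm_def)
  have pw: "is_perm n ?w" using assms k by (simp add: is_perm_swap)
  obtain j0 where j0: "j0 < length a" "swapped n a j0 = {x, y}"
    using claimA[OF pw R] assms(3) by blast
  let ?Q = "\<lambda>j. j < length a \<and> swapped n a j = {x, y}"
  let ?Q' = "\<lambda>j. j < length (a @ [k]) \<and> swapped n (a @ [k]) j = {x, y}"
  have "Least ?Q = Least ?Q'" "Least ?Q < length a"
    by (rule Least_agree[of ?Q j0 "length a" ?Q'], use j0 in \<open>auto simp: swapped_snoc_lt\<close>)+
  then show "P n (a @ [k]) x y = P n a x y" "P n a x y < length a"
    by (simp_all add: P_def)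
qed

lemma P_snoc_new:
  assumes "is_perm n w" "a @ [k] \<in> reduced_words n w"
  shows "P n (a @ [k]) (w!(k-1)) (w!k) = length a"
proof -
  let ?w = "swap_at k w"
  have D: "k \<in> Des w" and R: "a \<in> reduced_words n ?w" using assms R_snoc by auto
  have k: "1 \<le> k" "k < n" using D assms by (auto simp: Des_def2 is_perm_def)
  have pw: "is_perm n ?w" using assms k by (simp add: is_perm_swap)
  have w: "length w = n" "distinct w" using assms by (auto simp: is_perm_def)
  have act: "act a (id_word n) = ?w" using R by (simp add: reduced_words_def)
  have last: "swapped n (a @ [k]) (length a) = {w!(k-1), w!k}"
    using k w by (simp add: swapped_snoc_last act nth_swap insert_commute)
  have lt: "w!k < w!(k-1)" using D by (simp add: Des_def2)
  have notin: "(w!k, w!(k-1)) \<notin> Inv ?w" using Inv_snoc[OF assms(1) D] by simp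
  have no: "\<not> (j < length a \<and> swapped n a j = {w!(k-1), w!k})" for j
  proof
    assume "j < length a \<and> swapped n a j = {w!(k-1), w!k}"
    then obtain x y where "x < y" "(x, y) \<in> Inv ?w" "{x, y} = {w!(k-1), w!k}"
      using claimA[OF pw R] by metis
    then show False using lt notin by (auto simp: doubleton_eq_iff)
  qed
  show ?thesis unfolding P_def
  proof (rule Least_equality)
    show "length a < length (a @ [k]) \<and> swapped n (a @ [k]) (length a) = {w!(k-1), w!k}"
      using last by simp
    fix y assume y: "y < length (a @ [k]) \<and> swapped n (a @ [k]) y = {w!(k-1), w!k}"
    show "length a \<le> y"
    proof (rule ccontr)
      assume "\<not> length a \<le> y"
      then have "y < length a" by simp
      then show False using no[of y] y by (simp add: swapped_snoc_lt)
    qed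
  qed
qed



lemma triples_bf:
  assumes "distinct w"
  shows "(x, y, z) \<in> triples w \<longleftrightarrow> x < y \<and> y < z \<and> bf w z y \<and> bf w y x"
proof
  assume "(x, y, z) \<in> triples w"
  then obtain i j l where "x < y" "y < z" "i < j" "j < l" "l < length w" "w!i = z" "w!j = y" "w!l = x"
    by (auto simp: triples_def)
  then show "x < y \<and> y < z \<and> bf w z y \<and> bf w y x"
    using assms by (auto simp: bf_def ix_nth)
next
  assume A: "x < y \<and> y < z \<and> bf w z y \<and> bf w y x"
  then have "ix w z < ix w y" "ix w y < ix w x" "ix w x < length w"
    "w ! ix w z = z" "w ! ix w y = y" "w ! ix w x = x"
    using ix_in by (auto simp: bf_def)
  then show "(x, y, z) \<in> triples w" using A unfolding triples_def by blast
qed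

lemma in_set_take_ix:
  assumes "distinct w"
  shows "z \<in> set (take m w) \<longleftrightarrow> z \<in> set w \<and> ix w z < m"
proof
  assume "z \<in> set (take m w)"
  then obtain i where "i < length (take m w)" "take m w ! i = z" by (auto simp: in_set_conv_nth)
  then show "z \<in> set w \<and> ix w z < m" using assms by (auto simp: ix_nth)
next
  assume "z \<in> set w \<and> ix w z < m"
  then show "z \<in> set (take m w)" using ix_in[of z w]
    by (auto simp: in_set_conv_nth intro!: exI[of _ "ix w z"])
qed

definition S :: "nat list \<Rightarrow> nat \<Rightarrow> nat" where
  "S u k = card {z \<in> set (take (k - 1) u). u ! (k - 1) < z}"

lemma finite_triples: "finite (triples w)"
proof -
  have "triples w \<subseteq> set w \<times> set w \<times> set w"
    by (auto simp: triples_def)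
  then show ?thesis by (rule finite_subset) auto
qed

lemma tstat_snoc:
  assumes pw0: "is_perm n w" and R0: "a @ [k] \<in> reduced_words n w"
  shows "tstat w (a @ [k]) = tstat (swap_at k w) a + S w k"
proof -
  let ?w = "swap_at k w"
  have D: "k \<in> Des w" and R: "a \<in> reduced_words n ?w" using assms R_snoc by auto
  have k: "1 \<le> k" "k < n" using D assms by (auto simp: Des_def2 is_perm_def)
  have pw: "is_perm n ?w" using assms k by (simp add: is_perm_swap)
  have w: "length w = n" "distinct w" using assms by (auto simp: is_perm_def)
  define p where "p = w!(k-1)"
  define q where "q = w!k"
  have qp: "q < p" using D by (simp add: Des_def2 p_def q_def)
  have w': "length ?w = n" "distinct ?w" "?w!(k-1) = q" "?w!k = p"
    using w k by (auto simp: nth_swap p_def q_def)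
  have ww: "swap_at k ?w = w" using k w by simp
  have bfw: "bf w c d = (if {c, d} = {q, p} then bf ?w d c else bf ?w c d)" for c d
    using bf_swap[of ?w k c d] w' k ww by simp
  have bpq: "bf ?w q p" "\<not> bf ?w p q"
    using bf_pq[of ?w k] w' k by auto
  have ixp: "ix w p = k - 1" using ix_nth[of w "k-1"] w k by (simp add: p_def)
  have Pold: "P n (a @ [k]) x y = P n a x y \<and> P n a x y < length a" if "(x, y) \<in> Inv ?w" for x y
    using P_snoc_old[OF pw0 R0 that] by simp
  have Pnew: "P n (a @ [k]) p q = length a"
    using P_snoc_new[OF pw0 R0] by (simp add: p_def q_def)
  have Gam: "Gamma m b (x, y, z) = (if P m b y x > P m b z y then 1 else 0)" for m b x y z
    by (simp add: Gamma_def)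
  define T2 where "T2 = (\<lambda>z. (q, p, z)) ` {z \<in> set (take (k-1) w). p < z}"
  have tw: "(x, y, z) \<in> triples w \<longleftrightarrow> x < y \<and> y < z \<and> bf w z y \<and> bf w y x" for x y z
    using triples_bf[OF w(2)] .
  have tw': "(x, y, z) \<in> triples ?w \<longleftrightarrow> x < y \<and> y < z \<and> bf ?w z y \<and> bf ?w y x" for x y z
    using triples_bf[OF w'(2)] .
  have inT2: "(x, y, z) \<in> T2 \<longleftrightarrow> x = q \<and> y = p \<and> z \<in> set w \<and> ix w z < k - 1 \<and> p < z" for x y z
    unfolding T2_def using in_set_take_ix[OF w(2)] by auto
  have T2sub: "(q, p, z) \<in> supp w (a @ [k])" if "z \<in> set w" "ix w z < k - 1" "p < z" for z
  proof -
    have bzp: "bf w z p" using that ixp w k by (auto simp: bf_def p_def)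
    have bpq': "bf w p q" using bf_pq[of w k] w k by (simp add: p_def q_def)
    have "{z, p} \<noteq> {q, p}" using that qp by (auto simp: doubleton_eq_iff)
    then have "bf ?w z p" using bfw[of z p] bzp by simp
    then have "(p, z) \<in> Inv ?w" using that by (simp add: Inv_def)
    then have "P n (a @ [k]) p z < length a" using Pold by simp
    then have "P n (a @ [k]) z p < P n (a @ [k]) p q" using Pnew by (simp add: P_sym)
    then show ?thesis using tw[of q p z] qp that bzp bpq' w by (simp add: supp_def Gam)
  qed
  have key: "supp w (a @ [k]) = supp ?w a \<union> T2"
  proof (intro set_eqI iffI)
    fix t assume t: "t \<in> supp w (a @ [k])"
    obtain x y z where xyz: "t = (x, y, z)" by (cases t) auto
    have T: "x < y" "y < z" "bf w z y" "bf w y x" and G: "Gamma n (a @ [k]) (x, y, z) = 1"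
      using t xyz tw w by (auto simp: supp_def)
    show "t \<in> supp ?w a \<union> T2"
    proof (cases "{z, y} = {q, p}")
      case True
      then have yz: "y = q" "z = p" using T qp by (auto simp: doubleton_eq_iff)
      have "{q, x} \<noteq> {q, p}" using T yz by (auto simp: doubleton_eq_iff)
      then have "bf ?w q x" using bfw[of q x] T yz by simp
      then have "(x, q) \<in> Inv ?w" using T yz by (simp add: Inv_def)
      then have "P n (a @ [k]) x q < length a" using Pold by simp
      then have "P n (a @ [k]) q x < length a" by (metis P_sym)
      then have False using G yz Pnew by (simp add: Gam P_sym)
      then show ?thesis ..
    next
      case F1: False
      show ?thesis
      proof (cases "{y, x} = {q, p}")
        case True
        then have xy: "x = q" "y = p" using T qp by (auto simp: doubleton_eq_iff)
        have "ix w z < k - 1" "z \<in> set w" using T xy ixp by (auto simp: bf_def)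
        then have "t \<in> T2" using inT2 xyz xy T by simp
        then show ?thesis ..
      next
        case F2: False
        have b: "bf ?w z y" "bf ?w y x" using T F1 F2 bfw[of z y] bfw[of y x] by auto
        then have I: "(y, z) \<in> Inv ?w" "(x, y) \<in> Inv ?w" using T by (auto simp: Inv_def)
        have "Gamma n a (x, y, z) = 1"
          using G Pold[OF I(1)] Pold[OF I(2)] by (simp add: Gam P_sym)
        then have "t \<in> supp ?w a" using xyz tw' T b w' by (simp add: supp_def)
        then show ?thesis ..
      qed
    qed
  next
    fix t assume t: "t \<in> supp ?w a \<union> T2"
    obtain x y z where xyz: "t = (x, y, z)" by (cases t) auto
    show "t \<in> supp w (a @ [k])"
    proof (cases "t \<in> T2")
      case True
      then show ?thesis using inT2 xyz T2sub by auto
    next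
      case False
      then have ts: "t \<in> supp ?w a" using t by simp
      have T: "x < y" "y < z" "bf ?w z y" "bf ?w y x" and G: "Gamma n a (x, y, z) = 1"
        using ts xyz tw' w' by (auto simp: supp_def)
      have F1: "{z, y} \<noteq> {q, p}" using T bpq qp by (auto simp: doubleton_eq_iff)
      have F2: "{y, x} \<noteq> {q, p}" using T bpq qp by (auto simp: doubleton_eq_iff)
      have b: "bf w z y" "bf w y x" using T F1 F2 bfw[of z y] bfw[of y x] by auto
      have I: "(y, z) \<in> Inv ?w" "(x, y) \<in> Inv ?w" using T by (auto simp: Inv_def)
      have "Gamma n (a @ [k]) (x, y, z) = 1"
        using G Pold[OF I(1)] Pold[OF I(2)] by (simp add: Gam P_sym)
      then show ?thesis using xyz tw T b w by (simp add: supp_def)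
    qed
  qed
  have disj: "supp ?w a \<inter> T2 = {}"
  proof -
    have "t \<notin> supp ?w a" if "t \<in> T2" for t
      using that bpq unfolding T2_def supp_def by (auto simp: tw')
    then show ?thesis by blast
  qed
  have fin: "finite (supp ?w a)" "finite T2"
    using finite_triples[of ?w] by (auto simp: supp_def T2_def)
  have cT2: "card T2 = S w k"
    unfolding T2_def S_def p_def by (subst card_image) (auto simp: inj_on_def)
  show ?thesis unfolding tstat_def key
    using card_Un_disjoint[OF fin disj] cT2 by simp
qed



lemma swap_comm:
  assumes "1 \<le> i" "1 \<le> j" "i < length u" "j < length u" "i \<ge> j + 2 \<or> j \<ge> i + 2"
  shows "swap_at i (swap_at j u) = swap_at j (swap_at i u)"
  by (rule nth_equalityI) (use assms in \<open>auto simp: nth_swap\<close>)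

lemma swap_braid:
  assumes "1 \<le> i" "i + 1 < length u"
  shows "swap_at i (swap_at (i+1) (swap_at i u)) = swap_at (i+1) (swap_at i (swap_at (i+1) u))"
  by (rule nth_equalityI) (use assms in \<open>auto simp: nth_swap\<close>)

lemma comm_step_sym: "comm_step a b \<Longrightarrow> comm_step b a"
  unfolding comm_step_def by blast

lemma braid_step_sym: "braid_step a b \<Longrightarrow> braid_step b a"
  unfolding braid_step_def by blast

lemma comm_R:
  assumes "a \<in> reduced_words n w" "comm_step a b"
  shows "b \<in> reduced_words n w"
proof -
  obtain xs ys i j where c: "i \<ge> j + 2 \<or> j \<ge> i + 2" "a = xs @ [i, j] @ ys" "b = xs @ [j, i] @ ys"
    using assms(2) unfolding comm_step_def by blast
  have sx: "set xs \<subseteq> {1..n-1}" and ij: "1 \<le> i" "i < n" "1 \<le> j" "j < n"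
    using assms(1) c by (auto simp: reduced_words_def)
  have l: "length (act xs (id_word n)) = n" using act_props[of xs "id_word n"] sx by simp
  have "act [i, j] (act xs (id_word n)) = act [j, i] (act xs (id_word n))"
    using swap_comm[of i j "act xs (id_word n)"] l ij c(1) by (simp add: act_def)
  moreover have "act b (id_word n) = act ys (act [j, i] (act xs (id_word n)))"
    "act a (id_word n) = act ys (act [i, j] (act xs (id_word n)))"
    using c by (simp_all only: act_append)
  ultimately have "act b (id_word n) = act a (id_word n)" by simp
  then show ?thesis using assms(1) c by (auto simp: reduced_words_def)
qed

lemma braid_R:
  assumes "a \<in> reduced_words n w" "braid_step a b"
  shows "b \<in> reduced_words n w"
proof -
  obtain xs ys i where c: "(a = xs @ [i, i+1, i] @ ys \<and> b = xs @ [i+1, i, i+1] @ ys) \<or>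
      (a = xs @ [i+1, i, i+1] @ ys \<and> b = xs @ [i, i+1, i] @ ys)"
    using assms(2) unfolding braid_step_def by blast
  have sx: "set xs \<subseteq> {1..n-1}" and ij: "1 \<le> i" "i + 1 < n"
    using assms(1) c by (auto simp: reduced_words_def)
  have l: "length (act xs (id_word n)) = n" using act_props[of xs "id_word n"] sx by simp
  have "act [i, i+1, i] (act xs (id_word n)) = act [i+1, i, i+1] (act xs (id_word n))"
    using swap_braid[of i "act xs (id_word n)"] l ij by (simp add: act_def)
  moreover have "act (xs @ [i, i+1, i] @ ys) (id_word n) = act ys (act [i, i+1, i] (act xs (id_word n)))"
    "act (xs @ [i+1, i, i+1] @ ys) (id_word n) = act ys (act [i+1, i, i+1] (act xs (id_word n)))"
    by (simp_all only: act_append)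
  ultimately have "act b (id_word n) = act a (id_word n)" using c by metis
  then show ?thesis using assms(1) c by (auto simp: reduced_words_def)
qed

lemma take_swap_in:
  assumes "1 \<le> j" "j < m" "m \<le> length u"
  shows "take m (swap_at j u) = swap_at j (take m u)"
  using assms by (simp add: swap_at_def take_update_swap)

lemma take_swap_out:
  assumes "m \<le> j - 1"
  shows "take m (swap_at j u) = take m u"
  using assms by (simp add: swap_at_def)

lemma S_swap_far:
  assumes "1 \<le> i" "1 \<le> j" "i < length u" "j < length u" "i \<ge> j + 2 \<or> j \<ge> i + 2"
  shows "S (swap_at j u) i = S u i"
proof -
  have v: "swap_at j u ! (i - 1) = u ! (i - 1)" using assms by (auto simp: nth_swap)
  have "set (take (i - 1) (swap_at j u)) = set (take (i - 1) u)"
  proof (cases "j \<ge> i + 2")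
    case True then show ?thesis using take_swap_out[of "i - 1" j u] by simp
  next
    case False
    then have "j < i - 1" using assms by simp
    then show ?thesis using assms take_swap_in[of j "i - 1" u] by simp
  qed
  then show ?thesis unfolding S_def v by simp
qed

lemma tstat_comm:
  assumes "is_perm n w" "xs @ [i, j] @ ys \<in> reduced_words n w" "i \<ge> j + 2 \<or> j \<ge> i + 2"
  shows "tstat w (xs @ [i, j] @ ys) = tstat w (xs @ [j, i] @ ys)"
  using assms
proof (induction ys arbitrary: w rule: rev_induct)
  case Nil
  have R1: "(xs @ [i]) @ [j] \<in> reduced_words n w" using Nil by simp
  have R2: "(xs @ [j]) @ [i] \<in> reduced_words n w"
    using comm_R[OF Nil(2), of "xs @ [j, i]"] Nil(3) by (simp add: comm_step_def) blast
  have w: "length w = n" using Nil by (simp add: is_perm_def)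
  have D1: "j \<in> Des w" and R1': "xs @ [i] \<in> reduced_words n (swap_at j w)"
    using R1 R_snoc[OF Nil(1)] by blast+
  have D2: "i \<in> Des w" and R2': "xs @ [j] \<in> reduced_words n (swap_at i w)"
    using R2 R_snoc[OF Nil(1)] by blast+
  have ij: "1 \<le> i" "i < n" "1 \<le> j" "j < n" using D1 D2 w by (auto simp: Des_def2)
  have p1: "is_perm n (swap_at j w)" "is_perm n (swap_at i w)"
    using Nil(1) ij by (auto intro: is_perm_swap)
  have D1': "i \<in> Des (swap_at j w)" and R1'': "xs \<in> reduced_words n (swap_at i (swap_at j w))"
    using R1' R_snoc[OF p1(1)] by blast+
  have D2': "j \<in> Des (swap_at i w)" and R2'': "xs \<in> reduced_words n (swap_at j (swap_at i w))"
    using R2' R_snoc[OF p1(2)] by blast+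
  have same: "swap_at i (swap_at j w) = swap_at j (swap_at i w)"
    using R1'' R2'' by (simp add: reduced_words_def)
  have t1: "tstat w (xs @ [i, j]) = tstat (swap_at i (swap_at j w)) xs + S (swap_at j w) i + S w j"
    using tstat_snoc[OF Nil(1) R1] tstat_snoc[OF p1(1) R1'] by simp
  have t2: "tstat w (xs @ [j, i]) = tstat (swap_at j (swap_at i w)) xs + S (swap_at i w) j + S w i"
    using tstat_snoc[OF Nil(1) R2] tstat_snoc[OF p1(2) R2'] by simp
  have s1: "S (swap_at j w) i = S w i" using S_swap_far[of i j w] ij w Nil(3) by simp
  have s2: "S (swap_at i w) j = S w j" using S_swap_far[of j i w] ij w Nil(3) by auto
  show ?case using t1 t2 s1 s2 same by simp
next
  case (snoc k ys)
  have Ra: "(xs @ [i, j] @ ys) @ [k] \<in> reduced_words n w" using snoc by simp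
  have Rb0: "xs @ [j, i] @ ys @ [k] \<in> reduced_words n w"
    using comm_R[OF snoc(3), of "xs @ [j, i] @ ys @ [k]"] snoc(4) by (simp add: comm_step_def) blast
  then have Rb: "(xs @ [j, i] @ ys) @ [k] \<in> reduced_words n w" by simp
  have D: "k \<in> Des w" and Ra': "xs @ [i, j] @ ys \<in> reduced_words n (swap_at k w)"
    using Ra R_snoc[OF snoc(2)] by blast+
  have w: "length w = n" using snoc by (simp add: is_perm_def)
  have pk: "is_perm n (swap_at k w)" using snoc(2) D w by (auto simp: Des_def2 intro: is_perm_swap)
  have "tstat w ((xs @ [i, j] @ ys) @ [k]) = tstat (swap_at k w) (xs @ [i, j] @ ys) + S w k"
    by (rule tstat_snoc[OF snoc(2) Ra])
  moreover have "tstat w ((xs @ [j, i] @ ys) @ [k]) = tstat (swap_at k w) (xs @ [j, i] @ ys) + S w k"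
    by (rule tstat_snoc[OF snoc(2) Rb])
  moreover have "tstat (swap_at k w) (xs @ [i, j] @ ys) = tstat (swap_at k w) (xs @ [j, i] @ ys)"
    by (rule snoc.IH[OF pk Ra' snoc(4)])
  ultimately show ?case by simp
qed



lemma card_ins:
  assumes "finite A" "c \<notin> A"
  shows "card {z \<in> insert c A. v < z} = card {z \<in> A. (v::nat) < z} + (if v < c then 1 else 0)"
proof (cases "v < c")
  case True
  then have "{z \<in> insert c A. v < z} = insert c {z \<in> A. v < z}" by auto
  then show ?thesis using assms True by simp
next
  case False
  then have "{z \<in> insert c A. v < z} = {z \<in> A. v < z}" by auto
  then show ?thesis using False by simp
qed

lemma S_succ:
  assumes "distinct u" "1 \<le> D" "D < length u"
  shows "S u (D+1) = card {z \<in> set (take (D-1) u). u!D < z} + (if u!D < u!(D-1) then 1 else 0)"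
proof -
  have t: "take D u = take (D-1) u @ [u!(D-1)]"
    using assms take_Suc_conv_app_nth[of "D-1" u] by simp
  have ni: "u!(D-1) \<notin> set (take (D-1) u)"
    using in_set_take_ix[OF assms(1)] ix_nth[OF assms(1), of "D-1"] assms by simp
  show ?thesis unfolding S_def using t card_ins[OF _ ni] by simp
qed

lemma tstat_braid:
  assumes pw: "is_perm n w" and R: "e @ [D+1, D, D+1] \<in> reduced_words n w"
  shows "e @ [D, D+1, D] \<in> reduced_words n w"
    "tstat w (e @ [D+1, D, D+1]) = tstat w (e @ [D, D+1, D]) + 1"
proof -
  show R2: "e @ [D, D+1, D] \<in> reduced_words n w"
    using braid_R[OF R, of "e @ [D, D+1, D]"] unfolding braid_step_def
    by (metis append_Nil2)
  have wl: "length w = n" "distinct w" using pw by (auto simp: is_perm_def)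
  define w1 where "w1 = swap_at (D+1) w"
  define w2 where "w2 = swap_at D w1"
  define w3 where "w3 = swap_at (D+1) w2"
  define v1 where "v1 = swap_at D w"
  define v2 where "v2 = swap_at (D+1) v1"
  define v3 where "v3 = swap_at D v2"
  have Ra: "(e @ [D+1, D]) @ [D+1] \<in> reduced_words n w" using R by simp
  have D1: "D+1 \<in> Des w" and Ra1: "(e @ [D+1]) @ [D] \<in> reduced_words n w1"
    using R_snoc[OF pw, of "e @ [D+1, D]" "D+1"] R unfolding w1_def by simp_all
  have DD: "1 \<le> D" "D + 1 < n" using D1 wl R by (auto simp: Des_def2 reduced_words_def)
  have pw1: "is_perm n w1" unfolding w1_def using pw DD by (simp add: is_perm_swap)
  have D2: "D \<in> Des w1" and Ra2: "e @ [D+1] \<in> reduced_words n w2"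
    using R_snoc[OF pw1, of "e @ [D+1]" D] Ra1 unfolding w2_def by simp_all
  have pw2: "is_perm n w2" unfolding w2_def using pw1 DD by (simp add: is_perm_swap)
  have D3: "D+1 \<in> Des w2" and Ra3: "e \<in> reduced_words n w3"
    using R_snoc[OF pw2, of e "D+1"] Ra2 unfolding w3_def by simp_all
  have Rb: "(e @ [D, D+1]) @ [D] \<in> reduced_words n w" using R2 by simp
  have Rb1: "(e @ [D]) @ [D+1] \<in> reduced_words n v1"
    using R_snoc[OF pw, of "e @ [D, D+1]" D] Rb unfolding v1_def by simp_all
  have pv1: "is_perm n v1" unfolding v1_def using pw DD by (simp add: is_perm_swap)
  have Rb2: "e @ [D] \<in> reduced_words n v2"
    using R_snoc[OF pv1, of "e @ [D]" "D+1"] Rb1 unfolding v2_def by simp_all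
  have pv2: "is_perm n v2" unfolding v2_def using pv1 DD by (simp add: is_perm_swap)
  have Rb3: "e \<in> reduced_words n v3"
    using R_snoc[OF pv2, of e D] Rb2 unfolding v3_def by simp_all
  have w3v3: "w3 = v3" using Ra3 Rb3 by (simp add: reduced_words_def)
  have ta: "tstat w (e @ [D+1, D, D+1]) = tstat w3 e + S w2 (D+1) + S w1 D + S w (D+1)"
    using tstat_snoc[OF pw Ra] tstat_snoc[OF pw1 Ra1] tstat_snoc[OF pw2 Ra2]
    unfolding w1_def w2_def w3_def by simp
  have tb: "tstat w (e @ [D, D+1, D]) = tstat v3 e + S v2 D + S v1 (D+1) + S w D"
    using tstat_snoc[OF pw Rb] tstat_snoc[OF pv1 Rb1] tstat_snoc[OF pv2 Rb2]
    unfolding v1_def v2_def v3_def by simp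
  define p where "p = w!(D-1)"
  define q where "q = w!D"
  define r where "r = w!(D+1)"
  define P0 where "P0 = set (take (D-1) w)"
  have n1: "w1!(D-1) = p" "w1!D = r" "w1!(D+1) = q"
    unfolding w1_def p_def q_def r_def using DD wl by (auto simp: nth_swap)
  have n2: "w2!(D-1) = r" "w2!D = p" "w2!(D+1) = q"
    unfolding w2_def using n1 DD wl by (auto simp: nth_swap w1_def)
  have m1: "v1!(D-1) = q" "v1!D = p" "v1!(D+1) = r"
    unfolding v1_def p_def q_def r_def using DD wl by (auto simp: nth_swap)
  have m2: "v2!(D-1) = q" "v2!D = r"
    unfolding v2_def using m1 DD wl by (auto simp: nth_swap v1_def)
  have qr: "r < q" using D1 by (simp add: Des_def2 q_def r_def)
  have pr: "r < p" using D2 n1 by (simp add: Des_def2)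
  have pq: "q < p" using D3 n2 by (simp add: Des_def2)
  have tk: "take (D-1) w1 = take (D-1) w" "take (D-1) w2 = take (D-1) w"
    "take (D-1) v1 = take (D-1) w" "take (D-1) v2 = take (D-1) w"
    unfolding w2_def w1_def v2_def v1_def by (simp_all add: take_swap_out)
  have dist: "distinct w1" "distinct w2" "distinct v1" "distinct v2" "length w1 = n"
    "length w2 = n" "length v1 = n" "length v2 = n"
    using pw1 pw2 pv1 pv2 by (auto simp: is_perm_def)
  have s1: "S w (D+1) = card {z \<in> P0. q < z} + 1"
    using S_succ[of w D] wl DD pq by (simp add: P0_def p_def q_def)
  have s2: "S w1 D = card {z \<in> P0. p < z}" unfolding S_def P0_def using tk n1 by simp
  have s3: "S w2 (D+1) = card {z \<in> P0. p < z}"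
    using S_succ[of w2 D] dist DD n2 pr tk by (simp add: P0_def)
  have s4: "S w D = card {z \<in> P0. p < z}" unfolding S_def P0_def p_def by simp
  have s5: "S v1 (D+1) = card {z \<in> P0. p < z}"
    using S_succ[of v1 D] dist DD m1 pq tk by (simp add: P0_def)
  have s6: "S v2 D = card {z \<in> P0. q < z}" unfolding S_def P0_def using tk m2 by simp
  show "tstat w (e @ [D+1, D, D+1]) = tstat w (e @ [D, D+1, D]) + 1"
    using ta tb s1 s2 s3 s4 s5 s6 w3v3 by simp
qed



lemma amin_iter_Suc: "amin_iter w (Suc j) = amin_iter (swap_at (Min (Des w)) w) j"
  by (simp add: amin_iter_def funpow_Suc_right del: funpow.simps)

lemma amax_iter_Suc: "amax_iter w (Suc j) = amax_iter (swap_at (Max (Des w)) w) j"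
  by (simp add: amax_iter_def funpow_Suc_right del: funpow.simps)

lemma len_desc:
  assumes "is_perm n w" "k \<in> Des w"
  shows "len w = Suc (len (swap_at k w))"
proof -
  have w: "length w = n" "distinct w" using assms by (auto simp: is_perm_def)
  show ?thesis using len_swap[of w k] w assms(2) by (auto simp: Des_def2)
qed

lemma upt_Suc_shift: "[0..<Suc L] = 0 # map Suc [0..<L]"
  by (simp add: upt_conv_Cons map_Suc_upt del: upt_Suc)

lemma a_min_unfold:
  assumes "is_perm n w" "Des w \<noteq> {}"
  shows "a_min w = a_min (swap_at (Min (Des w)) w) @ [Min (Des w)]"
proof -
  have m: "Min (Des w) \<in> Des w" using assms(2) Des_finite by (rule Min_in[rotated])
  have L: "len w = Suc (len (swap_at (Min (Des w)) w))" by (rule len_desc[OF assms(1) m])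
  show ?thesis
    unfolding a_min_def L upt_Suc_shift
    by (simp add: amin_iter_Suc o_def amin_iter_def[of _ 0])
qed

lemma a_max_unfold:
  assumes "is_perm n w" "Des w \<noteq> {}"
  shows "a_max w = a_max (swap_at (Max (Des w)) w) @ [Max (Des w)]"
proof -
  have m: "Max (Des w) \<in> Des w" using assms(2) Des_finite by (rule Max_in[rotated])
  have L: "len w = Suc (len (swap_at (Max (Des w)) w))" by (rule len_desc[OF assms(1) m])
  show ?thesis
    unfolding a_max_def L upt_Suc_shift
    by (simp add: amax_iter_Suc o_def amax_iter_def[of _ 0])
qed

lemma a_min_0: "len w = 0 \<Longrightarrow> a_min w = []" by (simp add: a_min_def)
lemma a_max_0: "len w = 0 \<Longrightarrow> a_max w = []" by (simp add: a_max_def)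

lemma comm_step_app: "comm_step a b \<Longrightarrow> comm_step (a @ c) (b @ c)"
  unfolding comm_step_def by fastforce

lemma comm_equiv_app: "comm_equiv a b \<Longrightarrow> comm_equiv (a @ c) (b @ c)"
  unfolding comm_equiv_def
proof (induction rule: rtranclp_induct)
  case base then show ?case by simp
next
  case (step y z)
  then show ?case using comm_step_app[OF step(2), of c] by (meson rtranclp.rtrancl_into_rtrancl)
qed

lemma comm_equiv_end: "i \<ge> j + 2 \<or> j \<ge> i + 2 \<Longrightarrow> comm_equiv (e @ [i, j]) (e @ [j, i])"
  unfolding comm_equiv_def comm_step_def
  by (rule r_into_rtranclp) (intro exI[of _ e] exI[of _ "[]"], auto)

lemma comm_equiv_trans: "comm_equiv a b \<Longrightarrow> comm_equiv b c \<Longrightarrow> comm_equiv a c"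
  unfolding comm_equiv_def by simp

lemma PM_min:
  "\<forall>v. len v = L \<longrightarrow> is_perm n v \<longrightarrow> j \<in> Des v \<longrightarrow> (\<forall>i<j-1. v!i < v!(j-1)) \<longrightarrow>
      (\<exists>e. comm_equiv (a_min v) (e @ [j]))"
proof (induction L)
  case 0
  then show ?case using len0_iff by blast
next
  case (Suc L)
  show ?case
  proof (intro allI impI)
    fix v assume lv: "len v = Suc L" and pv: "is_perm n v" and jD: "j \<in> Des v"
      and pm: "\<forall>i<j-1. v!i < v!(j-1)"
    have vl: "length v = n" "distinct v" using pv by (auto simp: is_perm_def)
    define m where "m = Min (Des v)"
    have ne: "Des v \<noteq> {}" using jD by auto
    have mD: "m \<in> Des v" unfolding m_def using ne Des_finite by (rule Min_in[rotated])
    have mj: "m \<le> j" unfolding m_def using jD Des_finite by simp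
    have am: "a_min v = a_min (swap_at m v) @ [m]" unfolding m_def by (rule a_min_unfold[OF pv ne])
    show "\<exists>e. comm_equiv (a_min v) (e @ [j])"
    proof (cases "m = j")
      case True
      then show ?thesis using am by (auto simp: comm_equiv_def)
    next
      case False
      have m1: "1 \<le> m" "m < n" "v!(m-1) > v!m" using mD vl by (auto simp: Des_def2)
      have j1: "1 \<le> j" "j < n" "v!(j-1) > v!j" using jD vl by (auto simp: Des_def2)
      have "m \<noteq> j - 1"
      proof
        assume "m = j - 1"
        then have "v!(m-1) < v!(j-1)" using pm m1 j1 False mj by auto
        then show False using m1 \<open>m = j - 1\<close> by simp
      qed
      then have mj2: "m + 2 \<le> j" using False mj by simp
      let ?v = "swap_at m v"
      have pv': "is_perm n ?v" using pv m1 by (simp add: is_perm_swap)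
      have lv': "len ?v = L" using len_desc[OF pv mD] lv by simp
      have jD': "j \<in> Des ?v" using jD mj2 m1 j1 vl by (auto simp: Des_def2 nth_swap)
      have pm': "\<forall>i<j-1. ?v!i < ?v!(j-1)"
        using pm mj2 m1 j1 vl by (auto simp: nth_swap)
      obtain e where e: "comm_equiv (a_min ?v) (e @ [j])"
        using Suc.IH lv' pv' jD' pm' by blast
      have "comm_equiv (a_min v) (e @ [j, m])" using comm_equiv_app[OF e, of "[m]"] am by simp
      moreover have "comm_equiv (e @ [j, m]) (e @ [m, j])" using mj2 by (intro comm_equiv_end) simp
      ultimately have "comm_equiv (a_min v) ((e @ [m]) @ [j])" using comm_equiv_trans by simp
      then show ?thesis by blast
    qed
  qed
qed

lemma PM_max:
  "\<forall>v. len v = L \<longrightarrow> is_perm n v \<longrightarrow> j \<in> Des v \<longrightarrow> (\<forall>i. j < i \<and> i < length v \<longrightarrow> v!j < v!i) \<longrightarrow>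
      (\<exists>e. comm_equiv (a_max v) (e @ [j]))"
proof (induction L)
  case 0
  then show ?case using len0_iff by blast
next
  case (Suc L)
  show ?case
  proof (intro allI impI)
    fix v assume lv: "len v = Suc L" and pv: "is_perm n v" and jD: "j \<in> Des v"
      and pm: "\<forall>i. j < i \<and> i < length v \<longrightarrow> v!j < v!i"
    have vl: "length v = n" "distinct v" using pv by (auto simp: is_perm_def)
    define m where "m = Max (Des v)"
    have ne: "Des v \<noteq> {}" using jD by auto
    have mD: "m \<in> Des v" unfolding m_def using ne Des_finite by (rule Max_in[rotated])
    have mj: "j \<le> m" unfolding m_def using jD Des_finite by simp
    have am: "a_max v = a_max (swap_at m v) @ [m]" unfolding m_def by (rule a_max_unfold[OF pv ne])
    show "\<exists>e. comm_equiv (a_max v) (e @ [j])"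
    proof (cases "m = j")
      case True
      then show ?thesis using am by (auto simp: comm_equiv_def)
    next
      case False
      have m1: "1 \<le> m" "m < n" "v!(m-1) > v!m" using mD vl by (auto simp: Des_def2)
      have j1: "1 \<le> j" "j < n" "v!(j-1) > v!j" using jD vl by (auto simp: Des_def2)
      have "m \<noteq> j + 1"
      proof
        assume "m = j + 1"
        then have "v!j < v!m" using pm m1 vl by auto
        then show False using m1 \<open>m = j + 1\<close> by simp
      qed
      then have mj2: "j + 2 \<le> m" using False mj by simp
      let ?v = "swap_at m v"
      have pv': "is_perm n ?v" using pv m1 by (simp add: is_perm_swap)
      have lv': "len ?v = L" using len_desc[OF pv mD] lv by simp
      have jD': "j \<in> Des ?v" using jD mj2 m1 j1 vl by (auto simp: Des_def2 nth_swap)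
      have jm: "j < m - 1 \<and> m - 1 < length v" using mj2 m1 vl by auto
      have x: "v!j < v!(m-1)" using pm jm by blast
      have pm': "\<forall>i. j < i \<and> i < length ?v \<longrightarrow> ?v!j < ?v!i"
        using pm mj2 m1 j1 vl x by (auto simp: nth_swap)
      obtain e where e: "comm_equiv (a_max ?v) (e @ [j])"
        using Suc.IH lv' pv' jD' pm' by blast
      have "comm_equiv (a_max v) (e @ [j, m])" using comm_equiv_app[OF e, of "[m]"] am by simp
      moreover have "comm_equiv (e @ [j, m]) (e @ [m, j])" using mj2 by (intro comm_equiv_end) simp
      ultimately have "comm_equiv (a_max v) ((e @ [m]) @ [j])" using comm_equiv_trans by simp
      then show ?thesis by blast
    qed
  qed
qed



definition rstep :: "nat \<Rightarrow> nat list \<Rightarrow> int \<Rightarrow> nat list \<Rightarrow> nat list \<Rightarrow> bool" where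
  "rstep n w \<delta> a b \<longleftrightarrow> a \<in> reduced_words n w \<and>
     (comm_step a b \<or> (braid_step a b \<and> int (tstat w b) = int (tstat w a) + \<delta>))"

lemma rstep_R: "rstep n w \<delta> a b \<Longrightarrow> b \<in> reduced_words n w"
  unfolding rstep_def using comm_R braid_R by blast

lemma rsteps_R: "(rstep n w \<delta>)\<^sup>*\<^sup>* a b \<Longrightarrow> a \<in> reduced_words n w \<Longrightarrow> b \<in> reduced_words n w"
  by (induction rule: rtranclp_induct) (auto dest: rstep_R)

lemma comm_rsteps: "comm_equiv a b \<Longrightarrow> a \<in> reduced_words n w \<Longrightarrow> (rstep n w \<delta>)\<^sup>*\<^sup>* a b"
  unfolding comm_equiv_def
proof (induction rule: rtranclp_induct)
  case base then show ?case by simp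
next
  case (step y z)
  then have "y \<in> reduced_words n w" using rsteps_R by blast
  then have "rstep n w \<delta> y z" using step by (simp add: rstep_def)
  then show ?case using step by (meson rtranclp.rtrancl_into_rtrancl)
qed

lemma braid_step_app: "braid_step a b \<Longrightarrow> braid_step (a @ c) (b @ c)"
  unfolding braid_step_def by fastforce

lemma lift1:
  assumes pw: "is_perm n w" and kD: "k \<in> Des w" and st: "rstep n (swap_at k w) \<delta> a b"
  shows "rstep n w \<delta> (a @ [k]) (b @ [k])"
proof -
  have Ra: "a \<in> reduced_words n (swap_at k w)" using st by (simp add: rstep_def)
  have Rb: "b \<in> reduced_words n (swap_at k w)" using st by (rule rstep_R)
  have Ra': "a @ [k] \<in> reduced_words n w" using R_snoc[OF pw] kD Ra by simp
  have Rb': "b @ [k] \<in> reduced_words n w" using R_snoc[OF pw] kD Rb by simp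
  show ?thesis
    using st Ra' tstat_snoc[OF pw Ra'] tstat_snoc[OF pw Rb'] comm_step_app braid_step_app
    unfolding rstep_def by auto
qed

lemma lift:
  assumes pw: "is_perm n w" and kD: "k \<in> Des w"
    and st: "(rstep n (swap_at k w) \<delta>)\<^sup>*\<^sup>* a b"
  shows "(rstep n w \<delta>)\<^sup>*\<^sup>* (a @ [k]) (b @ [k])"
  using st
proof (induction rule: rtranclp_induct)
  case base then show ?case by simp
next
  case (step y z)
  then show ?case using lift1[OF pw kD step(2)] by (meson rtranclp.rtrancl_into_rtrancl)
qed

lemma asc_chain:
  fixes f :: "nat \<Rightarrow> nat"
  assumes "\<And>l. a < l \<Longrightarrow> l \<le> b \<Longrightarrow> f (l - 1) < f l"
  shows "a \<le> i \<Longrightarrow> i < j \<Longrightarrow> j \<le> b \<Longrightarrow> f i < f j"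
proof (induction j)
  case 0 then show ?case by simp
next
  case (Suc j)
  have s: "f j < f (Suc j)" using assms[of "Suc j"] Suc by simp
  show ?case
  proof (cases "i = j")
    case True then show ?thesis using s by simp
  next
    case False
    then have "f i < f j" using Suc by simp
    then show ?thesis using s by simp
  qed
qed

lemma notDes_asc:
  assumes "distinct w" "1 \<le> l" "l < length w" "l \<notin> Des w"
  shows "w!(l-1) < w!l"
proof -
  have "w!(l-1) \<noteq> w!l" using assms by (simp add: nth_eq_iff_index_eq)
  then show ?thesis using assms by (auto simp: Des_def2)
qed

lemma prefix_asc:
  assumes "distinct w" "d \<in> Des w" "\<forall>l\<in>Des w. d \<le> l" "i < d - 1"
  shows "w!i < w!(d-1)"
proof -
  have d: "d < length w" using assms by (simp add: Des_def2)
  have "w!(l-1) < w!l" if "0 < l" "l \<le> d - 1" for l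
    using notDes_asc[of w l] assms(1,3) that d by force
  then show ?thesis using asc_chain[of 0 "d-1" "\<lambda>i. w!i" i "d-1"] assms by simp
qed

lemma suffix_asc:
  assumes "distinct w" "d \<in> Des w" "\<forall>l\<in>Des w. l \<le> d" "d < i" "i < length w"
  shows "w!d < w!i"
proof -
  have "w!(l-1) < w!l" if "d < l" "l \<le> length w - 1" for l
    using notDes_asc[of w l] assms(1,3) that by force
  then show ?thesis using asc_chain[of d "length w - 1" "\<lambda>i. w!i" d i] assms by simp
qed

lemma Min_Des_swap:
  assumes pw: "is_perm n w" and dD: "d \<in> Des w" and dmin: "\<forall>l\<in>Des w. d \<le> l"
    and k: "d + 1 \<le> k" "k < n" and d': "d \<in> Des (swap_at k w)"
  shows "Min (Des (swap_at k w)) = d"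
proof (rule Min_eqI[OF Des_finite])
  show "d \<in> Des (swap_at k w)" by (rule d')
  fix l assume l: "l \<in> Des (swap_at k w)"
  show "d \<le> l"
  proof (rule ccontr)
    assume "\<not> d \<le> l"
    then have "l < d" by simp
    have wl: "length w = n" using pw by (simp add: is_perm_def)
    have l1: "1 \<le> l" "l < length w" using l by (auto simp: Des_def2)
    have "l \<noteq> k - 1" "l \<noteq> k" "l - 1 \<noteq> k - 1" "l - 1 \<noteq> k" using \<open>l < d\<close> k l1 by arith+
    then have "swap_at k w ! l = w ! l" "swap_at k w ! (l-1) = w ! (l-1)"
      using k l1 wl by (simp_all add: nth_swap)
    then have "l \<in> Des w" using l by (simp add: Des_def2)
    then show False using dmin \<open>l < d\<close> by auto
  qed
qed

lemma Max_Des_swap: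
  assumes pw: "is_perm n w" and dD: "d \<in> Des w" and dmax: "\<forall>l\<in>Des w. l \<le> d"
    and k: "1 \<le> k" "k \<le> d - 1" and d': "d \<in> Des (swap_at k w)"
  shows "Max (Des (swap_at k w)) = d"
proof (rule Max_eqI[OF Des_finite])
  show "d \<in> Des (swap_at k w)" by (rule d')
  fix l assume l: "l \<in> Des (swap_at k w)"
  show "l \<le> d"
  proof (rule ccontr)
    assume "\<not> l \<le> d"
    then have "d < l" by simp
    have "d < length w" using dD by (simp add: Des_def2)
    have wl: "length w = n" using pw by (simp add: is_perm_def)
    have l1: "1 \<le> l" "l < length w" using l by (auto simp: Des_def2)
    have "l \<noteq> k - 1" "l \<noteq> k" "l - 1 \<noteq> k - 1" "l - 1 \<noteq> k" using \<open>d < l\<close> k l1 by arith+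
    then have "swap_at k w ! l = w ! l" "swap_at k w ! (l-1) = w ! (l-1)"
      using k l1 wl \<open>d < length w\<close> by (simp_all add: nth_swap)
    then have "l \<in> Des w" using l by (simp add: Des_def2)
    then show False using dmax \<open>d < l\<close> by auto
  qed
qed



lemma main_min:
  "\<forall>w a. len w = L \<longrightarrow> is_perm n w \<longrightarrow> a \<in> reduced_words n w \<longrightarrow>
      (rstep n w (-1))\<^sup>*\<^sup>* a (a_min w)"
proof (induction L)
  case 0
  show ?case
  proof (intro allI impI)
    fix w a assume "len w = 0" "is_perm n w" "a \<in> reduced_words n w"
    then show "(rstep n w (-1))\<^sup>*\<^sup>* a (a_min w)" by (simp add: reduced_words_def a_min_0)
  qed
next
  case (Suc L)
  have IH: "(rstep n v (-1))\<^sup>*\<^sup>* b (a_min v)"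
    if "len v = L" "is_perm n v" "b \<in> reduced_words n v" for v b
    using Suc.IH that by blast
  show ?case
  proof (intro allI impI)
    fix w a assume lw: "len w = Suc L" and pw: "is_perm n w" and Ra: "a \<in> reduced_words n w"
    have wl: "length w = n" "distinct w" using pw by (auto simp: is_perm_def)
    have "a \<noteq> []" using Ra lw by (auto simp: reduced_words_def)
    then obtain a0 k where a: "a = a0 @ [k]" by (metis rev_exhaust)
    have kD: "k \<in> Des w" and Ra0: "a0 \<in> reduced_words n (swap_at k w)"
      using R_snoc[OF pw] Ra a by auto
    define d where "d = Min (Des w)"
    have ne: "Des w \<noteq> {}" using kD by auto
    have dD: "d \<in> Des w" unfolding d_def using ne Des_finite by (rule Min_in[rotated])
    have dmin: "\<forall>l\<in>Des w. d \<le> l" unfolding d_def using Des_finite by simp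
    have dk: "d \<le> k" using dmin kD by simp
    have d1: "1 \<le> d" "d < n" "w!(d-1) > w!d" using dD wl by (auto simp: Des_def2)
    have k1: "1 \<le> k" "k < n" "w!(k-1) > w!k" using kD wl by (auto simp: Des_def2)
    have K: "\<exists>b'. (rstep n w (-1))\<^sup>*\<^sup>* a (b' @ [d])"
    proof (cases "k = d")
      case True then show ?thesis using a by blast
    next
      case False
      let ?w = "swap_at k w"
      have pw': "is_perm n ?w" using pw k1 by (simp add: is_perm_swap)
      have lw': "len ?w = L" using len_desc[OF pw kD] lw by simp
      show ?thesis
      proof (cases "k = d + 1")
        case False
        then have kd2: "k \<ge> d + 2" using dk \<open>k \<noteq> d\<close> by simp
        have "?w!(d-1) = w!(d-1)" "?w!d = w!d" using kd2 d1 k1 wl by (auto simp: nth_swap)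
        then have dD': "d \<in> Des ?w" using d1 wl by (simp add: Des_def2)
        have mw: "Min (Des ?w) = d"
          using Min_Des_swap[OF pw dD dmin _ k1(2) dD'] kd2 by simp
        define c where "c = a_min (swap_at d ?w)"
        have am: "a_min ?w = c @ [d]"
          using a_min_unfold[OF pw'] dD' mw unfolding c_def by auto
        have s1: "(rstep n ?w (-1))\<^sup>*\<^sup>* a0 (c @ [d])" using IH[OF lw' pw' Ra0] am by simp
        have s2: "(rstep n w (-1))\<^sup>*\<^sup>* a (c @ [d, k])"
          using lift[OF pw kD s1] a by simp
        have Rc: "c @ [d, k] \<in> reduced_words n w" using rsteps_R[OF s2 Ra] .
        have "comm_step (c @ [d, k]) (c @ [k, d])"
          unfolding comm_step_def using kd2 by (intro exI[of _ c] exI[of _ "[]"]) auto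
        then have "rstep n w (-1) (c @ [d, k]) (c @ [k, d])" using Rc by (simp add: rstep_def)
        then have "(rstep n w (-1))\<^sup>*\<^sup>* a ((c @ [k]) @ [d])" using s2 by simp
        then show ?thesis by blast
      next
        case True
        define p where "p = w!(d-1)"
        define q where "q = w!d"
        define r where "r = w!(d+1)"
        have pq: "q < p" using d1 by (simp add: p_def q_def)
        have qr: "r < q" using k1 True by (simp add: q_def r_def)
        have n1: "?w!(d-1) = p" "?w!d = r" "?w!(d+1) = q" "\<And>i. i < d - 1 \<Longrightarrow> ?w!i = w!i"
          using True d1 k1 wl by (auto simp: nth_swap p_def q_def r_def)
        have dD': "d \<in> Des ?w" using d1 wl n1 pq qr by (simp add: Des_def2)
        have mw: "Min (Des ?w) = d"
          using Min_Des_swap[OF pw dD dmin _ k1(2) dD'] True by simp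
        define v where "v = swap_at d ?w"
        define c where "c = a_min v"
        have am: "a_min ?w = c @ [d]"
          using a_min_unfold[OF pw'] dD' mw unfolding c_def v_def by auto
        have s1: "(rstep n ?w (-1))\<^sup>*\<^sup>* a0 (c @ [d])" using IH[OF lw' pw' Ra0] am by simp
        have s2: "(rstep n w (-1))\<^sup>*\<^sup>* a (c @ [d, d+1])"
          using lift[OF pw kD s1] a True by simp
        have Rc: "c @ [d, d+1] \<in> reduced_words n w" using rsteps_R[OF s2 Ra] .
        have pv: "is_perm n v" unfolding v_def using pw' d1 by (simp add: is_perm_swap)
        have m1: "v!(d-1) = r" "v!d = p" "v!(d+1) = q" "\<And>i. i < d - 1 \<Longrightarrow> v!i = w!i"
          using n1 d1 k1 True wl by (auto simp: nth_swap v_def)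
        have jD: "d + 1 \<in> Des v" using m1 pq k1 True wl d1 by (simp add: Des_def2 v_def)
        have pre: "\<forall>i<d-1. w!i < w!(d-1)" using prefix_asc[OF wl(2) dD dmin] by blast
        have pm: "\<forall>i<d+1-1. v!i < v!(d+1-1)"
        proof (intro allI impI)
          fix i assume "i < d + 1 - 1"
          then have "i < d - 1 \<or> i = d - 1" by auto
          then show "v!i < v!(d+1-1)"
          proof
            assume "i < d - 1" then show ?thesis using m1 pre by (simp add: p_def)
          next
            assume "i = d - 1" then show ?thesis using m1 pq qr by simp
          qed
        qed
        obtain e where e: "comm_equiv c (e @ [d+1])"
          using PM_min[of "len v" n "d+1"] pv jD pm unfolding c_def by blast
        have "comm_equiv (c @ [d, d+1]) (e @ [d+1, d, d+1])"
          using comm_equiv_app[OF e, of "[d, d+1]"] by simp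
        then have s3: "(rstep n w (-1))\<^sup>*\<^sup>* (c @ [d, d+1]) (e @ [d+1, d, d+1])"
          using comm_rsteps Rc by blast
        have Re: "e @ [d+1, d, d+1] \<in> reduced_words n w" using rsteps_R[OF s3 Rc] .
        note tb = tstat_braid[OF pw Re]
        have "braid_step (e @ [d+1, d, d+1]) (e @ [d, d+1, d])"
          unfolding braid_step_def by (intro exI[of _ e] exI[of _ "[]"] exI[of _ d]) simp
        then have "rstep n w (-1) (e @ [d+1, d, d+1]) (e @ [d, d+1, d])"
          using Re tb by (simp add: rstep_def)
        then have "(rstep n w (-1))\<^sup>*\<^sup>* a (e @ [d+1, d, d+1] ) \<and>
            rstep n w (-1) (e @ [d+1, d, d+1]) (e @ [d, d+1, d])"
          using s2 s3 by simp
        then have "(rstep n w (-1))\<^sup>*\<^sup>* a (e @ [d, d+1, d])"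
          by (meson rtranclp.rtrancl_into_rtrancl)
        then have "(rstep n w (-1))\<^sup>*\<^sup>* a ((e @ [d, d+1]) @ [d])" by simp
        then show ?thesis by blast
      qed
    qed
    then obtain b' where sb: "(rstep n w (-1))\<^sup>*\<^sup>* a (b' @ [d])" by blast
    have Rb: "b' @ [d] \<in> reduced_words n w" using rsteps_R[OF sb Ra] .
    have Rb': "b' \<in> reduced_words n (swap_at d w)" using R_snoc[OF pw] Rb by simp
    have pd: "is_perm n (swap_at d w)" using pw d1 by (simp add: is_perm_swap)
    have ld: "len (swap_at d w) = L" using len_desc[OF pw dD] lw by simp
    have "(rstep n w (-1))\<^sup>*\<^sup>* (b' @ [d]) (a_min (swap_at d w) @ [d])"
      using lift[OF pw dD IH[OF ld pd Rb']] .
    moreover have "a_min w = a_min (swap_at d w) @ [d]"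
      using a_min_unfold[OF pw ne] unfolding d_def by simp
    ultimately show "(rstep n w (-1))\<^sup>*\<^sup>* a (a_min w)" using sb by simp
  qed
qed



lemma main_max:
  "\<forall>w a. len w = L \<longrightarrow> is_perm n w \<longrightarrow> a \<in> reduced_words n w \<longrightarrow>
      (rstep n w 1)\<^sup>*\<^sup>* a (a_max w)"
proof (induction L)
  case 0
  show ?case
  proof (intro allI impI)
    fix w a assume "len w = 0" "is_perm n w" "a \<in> reduced_words n w"
    then show "(rstep n w 1)\<^sup>*\<^sup>* a (a_max w)" by (simp add: reduced_words_def a_max_0)
  qed
next
  case (Suc L)
  have IH: "(rstep n v 1)\<^sup>*\<^sup>* b (a_max v)"
    if "len v = L" "is_perm n v" "b \<in> reduced_words n v" for v b
    using Suc.IH that by blast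
  show ?case
  proof (intro allI impI)
    fix w a assume lw: "len w = Suc L" and pw: "is_perm n w" and Ra: "a \<in> reduced_words n w"
    have wl: "length w = n" "distinct w" using pw by (auto simp: is_perm_def)
    have "a \<noteq> []" using Ra lw by (auto simp: reduced_words_def)
    then obtain a0 k where a: "a = a0 @ [k]" by (metis rev_exhaust)
    have kD: "k \<in> Des w" and Ra0: "a0 \<in> reduced_words n (swap_at k w)"
      using R_snoc[OF pw] Ra a by auto
    define d where "d = Max (Des w)"
    have ne: "Des w \<noteq> {}" using kD by auto
    have dD: "d \<in> Des w" unfolding d_def using ne Des_finite by (rule Max_in[rotated])
    have dmax: "\<forall>l\<in>Des w. l \<le> d" unfolding d_def using Des_finite by simp
    have dk: "k \<le> d" using dmax kD by simp
    have d1: "1 \<le> d" "d < n" "w!(d-1) > w!d" using dD wl by (auto simp: Des_def2)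
    have k1: "1 \<le> k" "k < n" "w!(k-1) > w!k" using kD wl by (auto simp: Des_def2)
    have K: "\<exists>b'. (rstep n w 1)\<^sup>*\<^sup>* a (b' @ [d])"
    proof (cases "k = d")
      case True then show ?thesis using a by blast
    next
      case False
      let ?w = "swap_at k w"
      have pw': "is_perm n ?w" using pw k1 by (simp add: is_perm_swap)
      have lw': "len ?w = L" using len_desc[OF pw kD] lw by simp
      show ?thesis
      proof (cases "k = d - 1")
        case False
        then have kd2: "k + 2 \<le> d" using dk \<open>k \<noteq> d\<close> by simp
        have "?w!(d-1) = w!(d-1)" "?w!d = w!d" using kd2 d1 k1 wl by (auto simp: nth_swap)
        then have dD': "d \<in> Des ?w" using d1 wl by (simp add: Des_def2)
        have mw: "Max (Des ?w) = d"
          using Max_Des_swap[OF pw dD dmax k1(1) _ dD'] kd2 by simp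
        define c where "c = a_max (swap_at d ?w)"
        have am: "a_max ?w = c @ [d]"
          using a_max_unfold[OF pw'] dD' mw unfolding c_def by auto
        have s1: "(rstep n ?w 1)\<^sup>*\<^sup>* a0 (c @ [d])" using IH[OF lw' pw' Ra0] am by simp
        have s2: "(rstep n w 1)\<^sup>*\<^sup>* a (c @ [d, k])"
          using lift[OF pw kD s1] a by simp
        have Rc: "c @ [d, k] \<in> reduced_words n w" using rsteps_R[OF s2 Ra] .
        have "comm_step (c @ [d, k]) (c @ [k, d])"
          unfolding comm_step_def using kd2 by (intro exI[of _ c] exI[of _ "[]"]) auto
        then have "rstep n w 1 (c @ [d, k]) (c @ [k, d])" using Rc by (simp add: rstep_def)
        then have "(rstep n w 1)\<^sup>*\<^sup>* a ((c @ [k]) @ [d])" using s2 by simp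
        then show ?thesis by blast
      next
        case True
        have d2: "2 \<le> d" using True k1 by simp
        define p where "p = w!(d-2)"
        define q where "q = w!(d-1)"
        define r where "r = w!d"
        have pq: "q < p" using k1 True d2 by (simp add: p_def q_def numeral_2_eq_2)
        have qr: "r < q" using d1 by (simp add: q_def r_def)
        have n1: "?w!(d-2) = q" "?w!(d-1) = p" "?w!d = r" "\<And>i. d < i \<Longrightarrow> i < n \<Longrightarrow> ?w!i = w!i"
          using True d1 d2 k1 wl by (auto simp: nth_swap p_def q_def r_def numeral_2_eq_2)
        have dD': "d \<in> Des ?w" using d1 wl n1 pq qr by (simp add: Des_def2)
        have mw: "Max (Des ?w) = d"
          using Max_Des_swap[OF pw dD dmax k1(1) _ dD'] True by simp
        define v where "v = swap_at d ?w"
        define c where "c = a_max v"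
        have am: "a_max ?w = c @ [d]"
          using a_max_unfold[OF pw'] dD' mw unfolding c_def v_def by auto
        have s1: "(rstep n ?w 1)\<^sup>*\<^sup>* a0 (c @ [d])" using IH[OF lw' pw' Ra0] am by simp
        have s2: "(rstep n w 1)\<^sup>*\<^sup>* a (c @ [d, d-1])"
          using lift[OF pw kD s1] a True by simp
        have Rc: "c @ [d, d-1] \<in> reduced_words n w" using rsteps_R[OF s2 Ra] .
        have pv: "is_perm n v" unfolding v_def using pw' d1 by (simp add: is_perm_swap)
        have ar: "d - 2 \<noteq> d - 1" "d - 2 \<noteq> d" "d - 1 \<noteq> d" "d - 2 < n" "d - 1 < n" using d2 d1 by arith+
        have lw2: "length ?w = n" using wl by simp
        have v1: "v!(d-2) = ?w!(d-2)" using nth_swap[of d ?w "d-2"] ar d1 lw2 unfolding v_def by simp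
        have v2: "v!(d-1) = ?w!d" using nth_swap[of d ?w "d-1"] ar d1 lw2 unfolding v_def by simp
        have v3: "v!d = ?w!(d-1)" using nth_swap[of d ?w d] ar d1 lw2 unfolding v_def by simp
        have v4: "v!i = ?w!i" if "d < i" "i < n" for i
        proof -
          have "i \<noteq> d - 1" "i \<noteq> d" using that by auto
          then show ?thesis using nth_swap[of d ?w i] that d1 lw2 unfolding v_def by simp
        qed
        have m1: "v!(d-2) = q" "v!(d-1) = r" "v!d = p" "\<And>i. d < i \<Longrightarrow> i < n \<Longrightarrow> v!i = w!i"
          using v1 v2 v3 v4 n1 by simp_all
        have jD: "d - 1 \<in> Des v" using m1 pq qr k1 True wl d1 d2
          by (simp add: Des_def2 v_def numeral_2_eq_2)
        have suf: "\<forall>i. d < i \<and> i < length w \<longrightarrow> w!d < w!i"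
          using suffix_asc[OF wl(2) dD dmax] by blast
        have pm: "\<forall>i. d - 1 < i \<and> i < length v \<longrightarrow> v!(d-1) < v!i"
        proof (intro allI impI)
          fix i assume i: "d - 1 < i \<and> i < length v"
          then have "i = d \<or> d < i" by auto
          then show "v!(d-1) < v!i"
          proof
            assume "i = d" then show ?thesis using m1 pq qr by simp
          next
            assume "d < i" then show ?thesis using m1 suf i wl pv
              by (simp add: r_def is_perm_def)
          qed
        qed
        obtain e where e: "comm_equiv c (e @ [d-1])"
          using PM_max[of "len v" n "d-1"] pv jD pm unfolding c_def by blast
        have "comm_equiv (c @ [d, d-1]) (e @ [d-1, d, d-1])"
          using comm_equiv_app[OF e, of "[d, d-1]"] by simp
        then have s3: "(rstep n w 1)\<^sup>*\<^sup>* (c @ [d, d-1]) (e @ [d-1, d, d-1])"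
          using comm_rsteps Rc by blast
        have Re: "e @ [d-1, d, d-1] \<in> reduced_words n w" using rsteps_R[OF s3 Rc] .
        have bs: "braid_step (e @ [d-1, d, d-1]) (e @ [d, d-1, d])"
          unfolding braid_step_def using d1
          by (intro exI[of _ e] exI[of _ "[]"] exI[of _ "d-1"]) simp
        have Re2: "e @ [d-1+1, d-1, d-1+1] \<in> reduced_words n w"
          using braid_R[OF Re bs] d1 by simp
        note tb = tstat_braid[OF pw Re2]
        have "tstat w (e @ [d, d-1, d]) = tstat w (e @ [d-1, d, d-1]) + 1"
          using tb d1 by simp
        then have "rstep n w 1 (e @ [d-1, d, d-1]) (e @ [d, d-1, d])"
          using Re bs by (simp add: rstep_def)
        then have "(rstep n w 1)\<^sup>*\<^sup>* a (e @ [d-1, d, d-1] ) \<and>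
            rstep n w 1 (e @ [d-1, d, d-1]) (e @ [d, d-1, d])"
          using s2 s3 by simp
        then have "(rstep n w 1)\<^sup>*\<^sup>* a (e @ [d, d-1, d])"
          by (meson rtranclp.rtrancl_into_rtrancl)
        then have "(rstep n w 1)\<^sup>*\<^sup>* a ((e @ [d, d-1]) @ [d])" by simp
        then show ?thesis by blast
      qed
    qed
    then obtain b' where sb: "(rstep n w 1)\<^sup>*\<^sup>* a (b' @ [d])" by blast
    have Rb: "b' @ [d] \<in> reduced_words n w" using rsteps_R[OF sb Ra] .
    have Rb': "b' \<in> reduced_words n (swap_at d w)" using R_snoc[OF pw] Rb by simp
    have pd: "is_perm n (swap_at d w)" using pw d1 by (simp add: is_perm_swap)
    have ld: "len (swap_at d w) = L" using len_desc[OF pw dD] lw by simp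
    have "(rstep n w 1)\<^sup>*\<^sup>* (b' @ [d]) (a_max (swap_at d w) @ [d])"
      using lift[OF pw dD IH[OF ld pd Rb']] .
    moreover have "a_max w = a_max (swap_at d w) @ [d]"
      using a_max_unfold[OF pw ne] unfolding d_def by simp
    ultimately show "(rstep n w 1)\<^sup>*\<^sup>* a (a_max w)" using sb by simp
  qed
qed



lemma a_min_R: "\<forall>w. len w = L \<longrightarrow> is_perm n w \<longrightarrow> a_min w \<in> reduced_words n w"
proof (induction L)
  case 0 then show ?case using len0_iff by (auto simp: a_min_0 R_Nil)
next
  case (Suc L)
  show ?case
  proof (intro allI impI)
    fix w assume lw: "len w = Suc L" and pw: "is_perm n w"
    have ne: "Des w \<noteq> {}" using len0_iff[OF pw] lw by simp
    have m: "Min (Des w) \<in> Des w" using ne Des_finite by (rule Min_in[rotated])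
    have m1: "1 \<le> Min (Des w)" "Min (Des w) < n" using m pw by (auto simp: Des_def2 is_perm_def)
    have "a_min (swap_at (Min (Des w)) w) \<in> reduced_words n (swap_at (Min (Des w)) w)"
      using Suc.IH len_desc[OF pw m] lw is_perm_swap[OF pw m1] by simp
    then show "a_min w \<in> reduced_words n w"
      using a_min_unfold[OF pw ne] R_snoc[OF pw] m by simp
  qed
qed

lemma a_max_R: "\<forall>w. len w = L \<longrightarrow> is_perm n w \<longrightarrow> a_max w \<in> reduced_words n w"
proof (induction L)
  case 0 then show ?case using len0_iff by (auto simp: a_max_0 R_Nil)
next
  case (Suc L)
  show ?case
  proof (intro allI impI)
    fix w assume lw: "len w = Suc L" and pw: "is_perm n w"
    have ne: "Des w \<noteq> {}" using len0_iff[OF pw] lw by simp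
    have m: "Max (Des w) \<in> Des w" using ne Des_finite by (rule Max_in[rotated])
    have m1: "1 \<le> Max (Des w)" "Max (Des w) < n" using m pw by (auto simp: Des_def2 is_perm_def)
    have "a_max (swap_at (Max (Des w)) w) \<in> reduced_words n (swap_at (Max (Des w)) w)"
      using Suc.IH len_desc[OF pw m] lw is_perm_swap[OF pw m1] by simp
    then show "a_max w \<in> reduced_words n w"
      using a_max_unfold[OF pw ne] R_snoc[OF pw] m by simp
  qed
qed

lemma comm_const:
  assumes pw: "is_perm n w" and ce: "comm_equiv a b" and Ra: "a \<in> reduced_words n w"
  shows "b \<in> reduced_words n w \<and> tstat w a = tstat w b"
  using ce unfolding comm_equiv_def
proof (induction rule: rtranclp_induct)
  case base then show ?case using Ra by simp
next
  case (step y z)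
  then have Ry: "y \<in> reduced_words n w" and ty: "tstat w a = tstat w y" by auto
  obtain xs ys i j where c: "i \<ge> j + 2 \<or> j \<ge> i + 2" "y = xs @ [i, j] @ ys" "z = xs @ [j, i] @ ys"
    using step(2) unfolding comm_step_def by blast
  have "tstat w y = tstat w z" using tstat_comm[OF pw _ c(1)] Ry c by simp
  then show ?case using comm_R[OF Ry step(2)] ty by simp
qed

lemma comm_equiv_sym: "comm_equiv a b \<Longrightarrow> comm_equiv b a"
  unfolding comm_equiv_def
proof (induction rule: rtranclp_induct)
  case base then show ?case by simp
next
  case (step y z)
  then show ?case using comm_step_sym[OF step(2)] by (meson converse_rtranclp_into_rtranclp)
qed

lemma cclass_eq: "comm_equiv a b \<Longrightarrow> cclass a = cclass b"
  unfolding cclass_def using comm_equiv_sym comm_equiv_trans by blast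

lemma in_cclass: "a \<in> cclass a" by (simp add: cclass_def comm_equiv_def)

lemma vert_t:
  assumes pw: "is_perm n w" and A: "A \<in> vertices n w" and a: "a \<in> A" and b: "b \<in> A"
  shows "a \<in> reduced_words n w" "tstat w a = tstat w b"
proof -
  obtain c where c: "c \<in> reduced_words n w" "A = cclass c" using A by (auto simp: vertices_def)
  have "comm_equiv c a" "comm_equiv c b" using a b c by (auto simp: cclass_def)
  then show "a \<in> reduced_words n w" "tstat w a = tstat w b"
    using comm_const[OF pw _ c(1)] by metis+
qed

lemma vert_ne: "A \<in> vertices n w \<Longrightarrow> \<exists>a. a \<in> A"
  using in_cclass by (auto simp: vertices_def)

lemma cover_t:
  assumes pw: "is_perm n w" and cv: "cover n w A B" and a: "a \<in> A" and b: "b \<in> B"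
  shows "tstat w b = tstat w a + 1"
proof -
  obtain a' b' where "a' \<in> A" "b' \<in> B" "tstat w b' = tstat w a' + 1"
    using cv by (auto simp: cover_def)
  moreover have "A \<in> vertices n w" "B \<in> vertices n w" using cv by (auto simp: cover_def)
  ultimately show ?thesis using vert_t(2)[OF pw] a b by metis
qed

lemma chain_t:
  assumes pw: "is_perm n w" and ch: "(cover n w)\<^sup>*\<^sup>* A B"
  shows "A = B \<or> (\<forall>a\<in>A. \<forall>b\<in>B. tstat w a < tstat w b)"
  using ch
proof (induction rule: rtranclp_induct)
  case base then show ?case by simp
next
  case (step y z)
  have yv: "y \<in> vertices n w" using step(2) by (simp add: cover_def)
  obtain c where c: "c \<in> y" using vert_ne[OF yv] by blast
  have "tstat w a < tstat w b" if "a \<in> A" "b \<in> z" for a b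
  proof -
    have tb: "tstat w b = tstat w c + 1" using cover_t[OF pw step(2) c that(2)] .
    show ?thesis
    proof (cases "A = y")
      case True
      have "tstat w b = tstat w a + 1" using cover_t[OF pw step(2) that(1)[unfolded True] that(2)] .
      then show ?thesis by simp
    next
      case False
      then have "tstat w a < tstat w c" using step(3) that(1) c by auto
      then show ?thesis using tb by simp
    qed
  qed
  then show ?case by blast
qed

lemma down_cover:
  assumes pw: "is_perm n w" and st: "(rstep n w (-1))\<^sup>*\<^sup>* a b" and Ra: "a \<in> reduced_words n w"
  shows "(cover n w)\<^sup>*\<^sup>* (cclass b) (cclass a)"
  using st
proof (induction rule: rtranclp_induct)
  case base then show ?case by simp
next
  case (step y z)
  have Ry: "y \<in> reduced_words n w" using rsteps_R[OF step(1) Ra] .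
  have Rz: "z \<in> reduced_words n w" using rstep_R[OF step(2)] .
  have "(cover n w)\<^sup>*\<^sup>* (cclass z) (cclass y)"
  proof (cases "comm_step y z")
    case True
    then have "cclass y = cclass z"
      by (intro cclass_eq) (simp add: comm_equiv_def)
    then show ?thesis by simp
  next
    case False
    then have bs: "braid_step y z" and tt: "int (tstat w z) = int (tstat w y) - 1"
      using step(2) by (auto simp: rstep_def)
    have ne: "cclass z \<noteq> cclass y"
    proof
      assume eq: "cclass z = cclass y"
      have "z \<in> cclass y" using in_cclass[of z] eq by simp
      then have "comm_equiv y z" by (simp add: cclass_def)
      then show False using comm_const[OF pw _ Ry] tt by fastforce
    qed
    have v: "cclass z \<in> vertices n w" "cclass y \<in> vertices n w" using Ry Rz by (auto simp: vertices_def)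
    have adj: "adjacent (cclass z) (cclass y)"
      unfolding adjacent_def using ne in_cclass[of y] in_cclass[of z] braid_step_sym[OF bs] by blast
    have t1: "tstat w y = tstat w z + 1" using tt by simp
    have "cover n w (cclass z) (cclass y)"
      unfolding cover_def using v adj t1 in_cclass[of y] in_cclass[of z] by blast
    then show ?thesis by simp
  qed
  then show ?case using step(3) by simp
qed

lemma up_cover:
  assumes pw: "is_perm n w" and st: "(rstep n w 1)\<^sup>*\<^sup>* a b" and Ra: "a \<in> reduced_words n w"
  shows "(cover n w)\<^sup>*\<^sup>* (cclass a) (cclass b)"
  using st
proof (induction rule: rtranclp_induct)
  case base then show ?case by simp
next
  case (step y z)
  have Ry: "y \<in> reduced_words n w" using rsteps_R[OF step(1) Ra] .
  have Rz: "z \<in> reduced_words n w" using rstep_R[OF step(2)] .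
  have "(cover n w)\<^sup>*\<^sup>* (cclass y) (cclass z)"
  proof (cases "comm_step y z")
    case True
    then have "cclass y = cclass z"
      by (intro cclass_eq) (simp add: comm_equiv_def)
    then show ?thesis by simp
  next
    case False
    then have bs: "braid_step y z" and tt: "int (tstat w z) = int (tstat w y) + 1"
      using step(2) by (auto simp: rstep_def)
    have ne: "cclass y \<noteq> cclass z"
    proof
      assume eq: "cclass y = cclass z"
      have "z \<in> cclass y" using in_cclass[of z] eq by simp
      then have "comm_equiv y z" by (simp add: cclass_def)
      then show False using comm_const[OF pw _ Ry] tt by fastforce
    qed
    have v: "cclass z \<in> vertices n w" "cclass y \<in> vertices n w" using Ry Rz by (auto simp: vertices_def)
    have adj: "adjacent (cclass y) (cclass z)"
      unfolding adjacent_def using ne in_cclass[of y] in_cclass[of z] bs by blast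
    have t1: "tstat w z = tstat w y + 1" using tt by simp
    have "cover n w (cclass y) (cclass z)"
      unfolding cover_def using v adj t1 in_cclass[of y] in_cclass[of z] by blast
    then show ?thesis by simp
  qed
  then show ?case using step(3) by simp
qed



theorem mainTheorem8:
  fixes n :: nat and w :: "nat list"
  assumes "is_perm n w"
  shows "(\<forall>a b. a \<in> reduced_words n w \<and> comm_equiv a b \<longrightarrow> tstat w a = tstat w b)
    \<and> partial_order_on (vertices n w) (tord n w)
    \<and> (\<forall>A B. covers_in (vertices n w) (tord n w) A B \<longrightarrow>
          (\<forall>a\<in>A. \<forall>b\<in>B. tstat w b = tstat w a + 1))
    \<and> minimal_elts (vertices n w) (tord n w) = {cclass (a_min w)}
    \<and> maximal_elts (vertices n w) (tord n w) = {cclass (a_max w)}"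
proof -
  note pw = assms
  let ?V = "vertices n w"
  let ?r = "tord n w"
  have P1: "\<forall>a b. a \<in> reduced_words n w \<and> comm_equiv a b \<longrightarrow> tstat w a = tstat w b"
    using comm_const[OF pw] by blast
  have antis: "A = B" if "(A, B) \<in> ?r" "(B, A) \<in> ?r" for A B
  proof (rule ccontr)
    assume ne: "A \<noteq> B"
    have c1: "(cover n w)\<^sup>*\<^sup>* A B" "(cover n w)\<^sup>*\<^sup>* B A" "A \<in> ?V" "B \<in> ?V"
      using that by (auto simp: tord_def)
    obtain a b where ab: "a \<in> A" "b \<in> B" using vert_ne c1 by blast
    have "tstat w a < tstat w b" using chain_t[OF pw c1(1)] ne ab by auto
    moreover have "tstat w b < tstat w a" using chain_t[OF pw c1(2)] ne ab by auto
    ultimately show False by simp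
  qed
  have P2: "partial_order_on ?V ?r"
    unfolding partial_order_on_def preorder_on_def refl_on_def trans_def antisym_def
    using antis by (auto simp: tord_def)
  have P3: "\<forall>A B. covers_in ?V ?r A B \<longrightarrow> (\<forall>a\<in>A. \<forall>b\<in>B. tstat w b = tstat w a + 1)"
  proof (intro allI impI)
    fix A B assume cv: "covers_in ?V ?r A B"
    then have AB: "(cover n w)\<^sup>*\<^sup>* A B" "A \<noteq> B" "A \<in> ?V" "B \<in> ?V"
      and noC: "\<not> (\<exists>C\<in>?V. C \<noteq> A \<and> C \<noteq> B \<and> (A, C) \<in> ?r \<and> (C, B) \<in> ?r)"
      by (auto simp: covers_in_def tord_def)
    obtain C where C: "cover n w A C" "(cover n w)\<^sup>*\<^sup>* C B"
      using AB(1,2) by (metis converse_rtranclpE)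
    have CV: "C \<in> ?V" "C \<noteq> A" using C(1) by (auto simp: cover_def adjacent_def)
    have "C = B"
    proof (rule ccontr)
      assume "C \<noteq> B"
      moreover have "(A, C) \<in> ?r" using C(1) AB CV by (auto simp: tord_def)
      moreover have "(C, B) \<in> ?r" using C(2) AB CV by (auto simp: tord_def)
      ultimately show False using noC CV by blast
    qed
    then show "\<forall>a\<in>A. \<forall>b\<in>B. tstat w b = tstat w a + 1"
      using cover_t[OF pw] C(1) by blast
  qed
  have Rmin: "a_min w \<in> reduced_words n w" using a_min_R pw by blast
  have Rmax: "a_max w \<in> reduced_words n w" using a_max_R pw by blast
  have Mv: "cclass (a_min w) \<in> ?V" using Rmin by (simp add: vertices_def)
  have Xv: "cclass (a_max w) \<in> ?V" using Rmax by (simp add: vertices_def)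
  have belowM: "(cclass (a_min w), A) \<in> ?r" if AV: "A \<in> ?V" for A
  proof -
    obtain a where a: "a \<in> reduced_words n w" "A = cclass a" using AV by (auto simp: vertices_def)
    have "(rstep n w (-1))\<^sup>*\<^sup>* a (a_min w)" using main_min a pw by blast
    then have "(cover n w)\<^sup>*\<^sup>* (cclass (a_min w)) (cclass a)" using down_cover[OF pw _ a(1)] by blast
    then show ?thesis using a Mv AV by (simp add: tord_def)
  qed
  have aboveX: "(A, cclass (a_max w)) \<in> ?r" if AV: "A \<in> ?V" for A
  proof -
    obtain a where a: "a \<in> reduced_words n w" "A = cclass a" using AV by (auto simp: vertices_def)
    have "(rstep n w 1)\<^sup>*\<^sup>* a (a_max w)" using main_max a pw by blast
    then have "(cover n w)\<^sup>*\<^sup>* (cclass a) (cclass (a_max w))" using up_cover[OF pw _ a(1)] by blast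
    then show ?thesis using a Xv AV by (simp add: tord_def)
  qed
  have P4: "minimal_elts ?V ?r = {cclass (a_min w)}"
  proof (intro set_eqI iffI)
    fix A assume "A \<in> minimal_elts ?V ?r"
    then have "A \<in> ?V" "\<forall>B\<in>?V. (B, A) \<in> ?r \<longrightarrow> B = A" by (auto simp: minimal_elts_def)
    then show "A \<in> {cclass (a_min w)}" using belowM Mv by force
  next
    fix A assume "A \<in> {cclass (a_min w)}"
    then show "A \<in> minimal_elts ?V ?r"
      using Mv belowM antis by (auto simp: minimal_elts_def)
  qed
  have P5: "maximal_elts ?V ?r = {cclass (a_max w)}"
  proof (intro set_eqI iffI)
    fix A assume "A \<in> maximal_elts ?V ?r"
    then have "A \<in> ?V" "\<forall>B\<in>?V. (A, B) \<in> ?r \<longrightarrow> B = A" by (auto simp: maximal_elts_def)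
    then show "A \<in> {cclass (a_max w)}" using aboveX Xv by force
  next
    fix A assume "A \<in> {cclass (a_max w)}"
    then show "A \<in> maximal_elts ?V ?r"
      using Xv aboveX antis by (auto simp: maximal_elts_def)
  qed
  show ?thesis using P1 P2 P3 P4 P5 by blast
qed


end
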